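(* Let $G$ be a digraph and $G'$ a subgraph of $G$. Then $\mathrm{sstat}_{\mathtt{vsc}}(G')\le\mathrm{sstat}_{\mathtt{vsc}}(G)$, and $\mathrm{lifo}_{\mathbf{gv}}(G')\le\mathrm{lifo}_{\mathbf{gv}}(G)$ for every $\mathbf{gv}\in\{\mathtt{i},\mathtt{isc},\mathtt{v},\mathtt{vsc},\mathtt{mi},\mathtt{misc},\mathtt{mv},\mathtt{mvsc}\}$.
   Context: All digraphs are finite, simple, without self-loops and have at least one vertex (induced subgraphs appearing as game data may be empty). For a finite set $V$, $V^*$ is the set of finite words over $V$, $\epsilon$ the empty word; $X \preceq Y$ means $X$ is a prefix of $Y$; for $X=a_1\cdots a_n$, $|X|=n$ and $\mathrm{let}(X)=\{a_1,\dots,a_n\}$. $A\Delta B$ is symmetric difference. For $X\subseteq V(G)$, $G\setminus X$ is the subgraph induced by $V(G)\setminus X$. Induced subgraphs are identified with their vertex sets. An initial component of a digraph $H$ is a strongly connected component $C$ with no edge from $H\setminus C$ into $C$. A subgraph $H\subseteq G$ is successor-closed if there is no edge of $G$ from $H$ to $G\setminus H$. LIFO-search game on $G$. A position is a pair $(X,R)$ with $X\in V(G)^*$ and $R$ a (possibly empty) induced subgraph of $G\setminus\mathrm{let}(X)$. It is an $\mathtt{i}$-position if $R$ is successor-closed; an $\mathtt{isc}$-position if $R$ is a union of strongly connected components of $G\setminus\mathrm{let}(X)$; a $\mathtt{v}$-position if $R$ is successor-closed and has a unique initial component; a $\mathtt{vsc}$-position if $R$ is a strongly connected component of $G\setminus\mathrm{let}(X)$.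 For $\mathbf{gv}\in\{\mathtt{i},\mathtt{isc},\mathtt{v},\mathtt{vsc}\}$, a $\mathbf{gv}$-position $(X',R')$ is a $\mathbf{gv}$-successor of $(X,R)$ if ($X\preceq X'$ or $X'\preceq X$), $|\mathrm{let}(X)\Delta\mathrm{let}(X')|=1$, and: for $\mathbf{gv}\in\{\mathtt{i},\mathtt{v}\}$, every $v'\in R'$ is reachable by a directed path in $G\setminus(\mathrm{let}(X)\cap\mathrm{let}(X'))$ from some $v\in R$; for $\mathbf{gv}\in\{\mathtt{isc},\mathtt{vsc}\}$, every $v'\in R'$ lies in the same strongly connected component of $G\setminus(\mathrm{let}(X)\cap\mathrm{let}(X'))$ as some $v\in R$. For $\mathbf{gv}\in\{\mathtt{v},\mathtt{vsc}\}$, if $(\epsilon,G)$ is not a $\mathbf{gv}$-position it is nevertheless admitted as a special position whose $\mathbf{gv}$-successors are exactly the $\mathbf{gv}$-positions of the form $(\epsilon,R)$. A $\mathbf{gv}$-search from $(X_0,R_0)$ is a finite or infinite sequence of $\mathbf{gv}$-positions $(X_0,R_0),(X_1,R_1),\dots$ with each $(X_{i+1},R_{i+1})$ a $\mathbf{gv}$-successor of $(X_i,R_i)$; it is complete if it is infinite or $R_n=\emptyset$ for some $n$, and a complete search is winning for the searchers if $R_n=\emptyset$ for some $n$. A complete search from $(\epsilon,G)$ is monotone if $R_{i+1}\subseteq R_i$ for all $i$; searcher-stationary if $X_i\preceq X_{i+1}$ for all $i$ with $R_i\neq\emptyset$; uses at most $k$ searchers if $|X_i|\le k$ for all $i$.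 A (searcher) $\mathbf{gv}$-strategy is a function $\sigma$ from $\mathbf{gv}$-positions to $V(G)^*$ such that $\sigma(X,R)$ is the first component of some $\mathbf{gv}$-successor of $(X,R)$; a search is consistent with $\sigma$ if $X_{i+1}=\sigma(X_i,R_i)$ for all $i$. $\sigma$ is winning if every complete consistent search from $(\epsilon,G)$ is winning for the searchers; it is monotone / searcher-stationary / uses at most $k$ searchers if every complete consistent search from $(\epsilon,G)$ has that property. $\mathrm{lifo}_{\mathbf{gv}}(G)$ (resp. $\mathrm{lifo}_{\mathtt{m}\mathbf{gv}}(G)$) is the minimum $k$ such that there is a winning (resp. monotone winning) $\mathbf{gv}$-strategy on $G$ using at most $k$ searchers; $\mathrm{sstat}_{\mathtt{vsc}}(G)$ is the minimum $k$ such that there is a searcher-stationary winning $\mathtt{vsc}$-strategy on $G$ using at most $k$ searchers. *)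

theory Defs
  imports Main "HOL-Library.Extended_Nat" "HOL-Library.Sublist"
begin

text \<open>A digraph is given by a finite nonempty vertex set V and an edge set E \<subseteq> V \<times> V
  without self-loops. Induced subgraphs are identified with their vertex sets.\<close>

definition digraph :: "'a set \<Rightarrow> ('a \<times> 'a) set \<Rightarrow> bool" where
  "digraph V E \<longleftrightarrow> finite V \<and> V \<noteq> {} \<and> E \<subseteq> V \<times> V \<and> (\<forall>v. (v, v) \<notin> E)"

definition subgraph :: "'a set \<Rightarrow> ('a \<times> 'a) set \<Rightarrow> 'a set \<Rightarrow> ('a \<times> 'a) set \<Rightarrow> bool" where
  "subgraph V' E' V E \<longleftrightarrow> digraph V' E' \<and> digraph V E \<and> V' \<subseteq> V \<and> E' \<subseteq> E"

definition reach_in :: "('a \<times> 'a) set \<Rightarrow> 'a set \<Rightarrow> 'a \<Rightarrow> 'a \<Rightarrow> bool" where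
  "reach_in E W u v \<longleftrightarrow> u \<in> W \<and> v \<in> W \<and> (u, v) \<in> (E \<inter> (W \<times> W))\<^sup>*"

definition same_scc :: "('a \<times> 'a) set \<Rightarrow> 'a set \<Rightarrow> 'a \<Rightarrow> 'a \<Rightarrow> bool" where
  "same_scc E W u v \<longleftrightarrow> reach_in E W u v \<and> reach_in E W v u"

definition is_scc :: "('a \<times> 'a) set \<Rightarrow> 'a set \<Rightarrow> 'a set \<Rightarrow> bool" where
  "is_scc E W C \<longleftrightarrow> (\<exists>u\<in>W. C = {v. same_scc E W u v})"

definition succ_closed :: "('a \<times> 'a) set \<Rightarrow> 'a set \<Rightarrow> 'a set \<Rightarrow> bool" where
  "succ_closed E W R \<longleftrightarrow> R \<subseteq> W \<and> \<not> (\<exists>u v. (u, v) \<in> E \<and> u \<in> R \<and> v \<in> W - R)"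

definition initial_comp :: "('a \<times> 'a) set \<Rightarrow> 'a set \<Rightarrow> 'a set \<Rightarrow> bool" where
  "initial_comp E R C \<longleftrightarrow> is_scc E R C \<and> \<not> (\<exists>u v. (u, v) \<in> E \<and> u \<in> R - C \<and> v \<in> C)"

datatype gvar = GI | GISC | GV | GVSC

definition is_pos :: "gvar \<Rightarrow> 'a set \<Rightarrow> ('a \<times> 'a) set \<Rightarrow> 'a list \<Rightarrow> 'a set \<Rightarrow> bool" where
  "is_pos g V E X R \<longleftrightarrow> set X \<subseteq> V \<and> R \<subseteq> V - set X \<and>
     (case g of
        GI \<Rightarrow> succ_closed E (V - set X) R
      | GISC \<Rightarrow> (\<forall>v\<in>R. {u. same_scc E (V - set X) v u} \<subseteq> R)
      | GV \<Rightarrow> succ_closed E (V - set X) R \<and> (R = {} \<or> (\<exists>!C. initial_comp E R C))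
      | GVSC \<Rightarrow> R = {} \<or> is_scc E (V - set X) R)"

definition special :: "gvar \<Rightarrow> 'a set \<Rightarrow> ('a \<times> 'a) set \<Rightarrow> 'a list \<Rightarrow> 'a set \<Rightarrow> bool" where
  "special g V E X R \<longleftrightarrow> g \<in> {GV, GVSC} \<and> X = [] \<and> R = V \<and> \<not> is_pos g V E [] V"

definition admissible :: "gvar \<Rightarrow> 'a set \<Rightarrow> ('a \<times> 'a) set \<Rightarrow> 'a list \<Rightarrow> 'a set \<Rightarrow> bool" where
  "admissible g V E X R \<longleftrightarrow> is_pos g V E X R \<or> special g V E X R"

definition is_succ :: "gvar \<Rightarrow> 'a set \<Rightarrow> ('a \<times> 'a) set \<Rightarrow> 'a list \<times> 'a set \<Rightarrow> 'a list \<times> 'a set \<Rightarrow> bool" where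
  "is_succ g V E p p' \<longleftrightarrow>
     (let (X, R) = p; (X', R') = p' in
      if special g V E X R then X' = [] \<and> is_pos g V E [] R'
      else is_pos g V E X' R' \<and> (prefix X X' \<or> prefix X' X) \<and>
           card ((set X - set X') \<union> (set X' - set X)) = 1 \<and>
           (if g \<in> {GI, GV}
            then (\<forall>v'\<in>R'. \<exists>v\<in>R. reach_in E (V - (set X \<inter> set X')) v v')
            else (\<forall>v'\<in>R'. \<exists>v\<in>R. same_scc E (V - (set X \<inter> set X')) v v')))"

definition strategy :: "gvar \<Rightarrow> 'a set \<Rightarrow> ('a \<times> 'a) set \<Rightarrow> ('a list \<times> 'a set \<Rightarrow> 'a list) \<Rightarrow> bool" where
  "strategy g V E \<sigma> \<longleftrightarrow>
     (\<forall>X R. admissible g V E X R \<longrightarrow> (\<exists>R'. is_succ g V E (X, R) (\<sigma> (X, R), R')))"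

text \<open>A gv-search from (\<epsilon>,G) consistent with \<sigma>, of length N (N = \<infinity> for infinite searches):
  positions s 0, s 1, ..., s i for enat i < N.\<close>
definition cons_search :: "gvar \<Rightarrow> 'a set \<Rightarrow> ('a \<times> 'a) set \<Rightarrow> ('a list \<times> 'a set \<Rightarrow> 'a list)
    \<Rightarrow> (nat \<Rightarrow> 'a list \<times> 'a set) \<Rightarrow> enat \<Rightarrow> bool" where
  "cons_search g V E \<sigma> s N \<longleftrightarrow> N \<ge> 1 \<and> s 0 = ([], V) \<and>
     (\<forall>i. enat (Suc i) < N \<longrightarrow> is_succ g V E (s i) (s (Suc i)) \<and> fst (s (Suc i)) = \<sigma> (s i))"

definition complete :: "(nat \<Rightarrow> 'a list \<times> 'a set) \<Rightarrow> enat \<Rightarrow> bool" where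
  "complete s N \<longleftrightarrow> N = \<infinity> \<or> (\<exists>i. enat i < N \<and> snd (s i) = {})"

definition winning_search :: "(nat \<Rightarrow> 'a list \<times> 'a set) \<Rightarrow> enat \<Rightarrow> bool" where
  "winning_search s N \<longleftrightarrow> (\<exists>i. enat i < N \<and> snd (s i) = {})"

definition monotone_search :: "(nat \<Rightarrow> 'a list \<times> 'a set) \<Rightarrow> enat \<Rightarrow> bool" where
  "monotone_search s N \<longleftrightarrow> (\<forall>i. enat (Suc i) < N \<longrightarrow> snd (s (Suc i)) \<subseteq> snd (s i))"

definition stationary_search :: "(nat \<Rightarrow> 'a list \<times> 'a set) \<Rightarrow> enat \<Rightarrow> bool" where
  "stationary_search s N \<longleftrightarrow>
     (\<forall>i. enat (Suc i) < N \<longrightarrow> snd (s i) \<noteq> {} \<longrightarrow> prefix (fst (s i)) (fst (s (Suc i))))"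

definition bounded_search :: "nat \<Rightarrow> (nat \<Rightarrow> 'a list \<times> 'a set) \<Rightarrow> enat \<Rightarrow> bool" where
  "bounded_search k s N \<longleftrightarrow> (\<forall>i. enat i < N \<longrightarrow> length (fst (s i)) \<le> k)"

definition all_complete :: "gvar \<Rightarrow> 'a set \<Rightarrow> ('a \<times> 'a) set \<Rightarrow> ('a list \<times> 'a set \<Rightarrow> 'a list)
    \<Rightarrow> ((nat \<Rightarrow> 'a list \<times> 'a set) \<Rightarrow> enat \<Rightarrow> bool) \<Rightarrow> bool" where
  "all_complete g V E \<sigma> P \<longleftrightarrow> (\<forall>s N. cons_search g V E \<sigma> s N \<and> complete s N \<longrightarrow> P s N)"

definition lifo :: "gvar \<Rightarrow> 'a set \<Rightarrow> ('a \<times> 'a) set \<Rightarrow> enat" where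
  "lifo g V E = Inf {enat k | k. \<exists>\<sigma>. strategy g V E \<sigma> \<and> all_complete g V E \<sigma> winning_search
       \<and> all_complete g V E \<sigma> (bounded_search k)}"

definition mlifo :: "gvar \<Rightarrow> 'a set \<Rightarrow> ('a \<times> 'a) set \<Rightarrow> enat" where
  "mlifo g V E = Inf {enat k | k. \<exists>\<sigma>. strategy g V E \<sigma> \<and> all_complete g V E \<sigma> winning_search
       \<and> all_complete g V E \<sigma> monotone_search \<and> all_complete g V E \<sigma> (bounded_search k)}"

definition sstat_vsc :: "'a set \<Rightarrow> ('a \<times> 'a) set \<Rightarrow> enat" where
  "sstat_vsc V E = Inf {enat k | k. \<exists>\<sigma>. strategy GVSC V E \<sigma> \<and> all_complete GVSC V E \<sigma> winning_search
       \<and> all_complete GVSC V E \<sigma> stationary_search \<and> all_complete GVSC V E \<sigma> (bounded_search k)}"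

end

theory Submission
  imports Defs
begin

lemma reach_in_refl: "u \<in> W \<Longrightarrow> reach_in E W u u"
  by (simp add: reach_in_def)

lemma reach_in_mem: "reach_in E W u v \<Longrightarrow> u \<in> W \<and> v \<in> W"
  by (simp add: reach_in_def)

lemma reach_in_trans: "reach_in E W u v \<Longrightarrow> reach_in E W v w \<Longrightarrow> reach_in E W u w"
  unfolding reach_in_def by auto

lemma reach_in_edge: "(u,v) \<in> E \<Longrightarrow> u \<in> W \<Longrightarrow> v \<in> W \<Longrightarrow> reach_in E W u v"
  unfolding reach_in_def by auto

lemma reach_in_mono: "reach_in E W u v \<Longrightarrow> E \<subseteq> E2 \<Longrightarrow> W \<subseteq> W2 \<Longrightarrow> reach_in E2 W2 u v"
proof -
  assume a: "reach_in E W u v" "E \<subseteq> E2" "W \<subseteq> W2"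
  have "E \<inter> W \<times> W \<subseteq> E2 \<inter> W2 \<times> W2" using a by auto
  then show ?thesis using a unfolding reach_in_def using rtrancl_mono by blast
qed

lemma same_scc_refl: "u \<in> W \<Longrightarrow> same_scc E W u u"
  by (simp add: same_scc_def reach_in_refl)

lemma same_scc_trans: "same_scc E W u v \<Longrightarrow> same_scc E W v w \<Longrightarrow> same_scc E W u w"
  unfolding same_scc_def using reach_in_trans by metis

lemma same_scc_sym: "same_scc E W u v \<Longrightarrow> same_scc E W v u"
  unfolding same_scc_def by auto

lemma same_scc_mono: "same_scc E W u v \<Longrightarrow> E \<subseteq> E2 \<Longrightarrow> W \<subseteq> W2 \<Longrightarrow> same_scc E2 W2 u v"
  unfolding same_scc_def using reach_in_mono by metis

lemma same_scc_mem: "same_scc E W u v \<Longrightarrow> u \<in> W \<and> v \<in> W"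
  unfolding same_scc_def using reach_in_mem by metis

lemma reach_in_closed:
  assumes "succ_closed E W R" "u \<in> R" "reach_in E W u v" shows "v \<in> R"
proof -
  have "(u,v) \<in> (E \<inter> W \<times> W)\<^sup>*" using assms(3) by (simp add: reach_in_def)
  then show ?thesis
  proof (induct rule: rtrancl_induct)
    case base then show ?case using assms(2) .
  next
    case (step y z) then show ?case using assms(1) unfolding succ_closed_def by blast
  qed
qed

lemma reach_in_self_closure:
  assumes "reach_in E W w x" shows "reach_in E {y. reach_in E W w y} w x"
proof -
  have wW: "w \<in> W" using assms by (auto simp add: reach_in_def)
  have "(w,x) \<in> (E \<inter> W \<times> W)\<^sup>*" using assms by (auto simp add: reach_in_def)
  then have "(w,x) \<in> (E \<inter> {y. reach_in E W w y} \<times> {y. reach_in E W w y})\<^sup>*"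
  proof (induct rule: rtrancl_induct)
    case base then show ?case by simp
  next
    case (step y z)
    have yz: "(y,z) \<in> E" "y \<in> W" "z \<in> W" using step(2) by auto
    have "reach_in E W w y" using step(1) yz wW by (simp add: reach_in_def)
    moreover have "reach_in E W w z" using calculation yz reach_in_edge reach_in_trans by metis
    ultimately have "(y,z) \<in> E \<inter> {y. reach_in E W w y} \<times> {y. reach_in E W w y}" using yz by simp
    then show ?case using step(3) by (rule rtrancl_into_rtrancl[rotated])
  qed
  moreover have "reach_in E W w w" using wW by (rule reach_in_refl)
  moreover have "reach_in E W w x" using assms .
  ultimately show ?thesis by (simp add: reach_in_def)
qed

lemma reach_in_via:
  assumes "reach_in E W u v" "\<not> reach_in E (W - {a}) u v"
  shows "reach_in E W u a \<and> reach_in E W a v"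
proof -
  have p: "(u,v) \<in> (E \<inter> W \<times> W)\<^sup>*" and uW: "u \<in> W" using assms by (auto simp add: reach_in_def)
  have "\<not> reach_in E (W - {a}) u v \<longrightarrow> reach_in E W u a \<and> reach_in E W a v"
    using p
  proof (induct rule: rtrancl_induct)
    case base then show ?case using uW by (auto simp: reach_in_def)
  next
    case (step y z)
    have yW: "y \<in> W" and zW: "z \<in> W" and e: "(y,z) \<in> E" using step by auto
    have uy: "reach_in E W u y" using step uW by (simp add: reach_in_def)
    show ?case
    proof
      assume nz: "\<not> reach_in E (W - {a}) u z"
      show "reach_in E W u a \<and> reach_in E W a z"
      proof (cases "reach_in E (W - {a}) u y")
        case True
        then have "z = a" using nz reach_in_edge reach_in_trans yW zW e
          by (metis Diff_iff empty_iff insert_iff reach_in_mem)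
        then show ?thesis using uy yW zW e reach_in_edge reach_in_trans reach_in_refl by metis
      next
        case False
        then have "reach_in E W u a \<and> reach_in E W a y" using step by blast
        then show ?thesis using reach_in_edge reach_in_trans yW zW e by metis
      qed
    qed
  qed
  then show ?thesis using assms(2) by blast
qed

lemma enter_lemma:
  assumes "(x,y) \<in> (E \<inter> R \<times> R)\<^sup>*" "x \<notin> D" "y \<in> D"
  shows "\<exists>a b. (a,b) \<in> E \<and> a \<in> R \<and> a \<notin> D \<and> b \<in> D"
  using assms
proof (induct rule: rtrancl_induct)
  case base then show ?case by simp
next
  case (step y z) then show ?case by blast
qed

definition is_root :: "('a \<times> 'a) set \<Rightarrow> 'a set \<Rightarrow> 'a \<Rightarrow> bool" where
  "is_root E R r \<longleftrightarrow> r \<in> R \<and> (\<forall>v\<in>R. reach_in E R r v)"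

lemma edge_scc_back:
  assumes "(y,z) \<in> E" "y \<in> R" "same_scc E R x z"
  shows "reach_in E R y x"
proof -
  have zR: "z \<in> R" using assms(3) same_scc_mem by fast
  have "reach_in E R y z" using assms(1,2) zR by (rule reach_in_edge)
  moreover have "reach_in E R z x" using assms(3) by (simp add: same_scc_def)
  ultimately show ?thesis by (rule reach_in_trans)
qed

lemma root_initial:
  assumes "is_root E R r" shows "\<exists>!C. initial_comp E R C"
proof -
  let ?C = "{x. same_scc E R r x}"
  have rR: "r \<in> R" and rt: "\<And>v. v \<in> R \<Longrightarrow> reach_in E R r v" using assms by (auto simp: is_root_def)
  have ini: "initial_comp E R ?C"
    unfolding initial_comp_def is_scc_def
  proof (intro conjI)
    show "\<exists>u\<in>R. ?C = {v. same_scc E R u v}" using rR by blast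
    show "\<not> (\<exists>u v. (u, v) \<in> E \<and> u \<in> R - ?C \<and> v \<in> ?C)"
    proof
      assume "\<exists>u v. (u, v) \<in> E \<and> u \<in> R - ?C \<and> v \<in> ?C"
      then obtain y z where yz: "(y,z) \<in> E" "y \<in> R" "y \<notin> ?C" "same_scc E R r z" by blast
      have "reach_in E R y r" using yz(1,2,4) by (rule edge_scc_back)
      moreover have "reach_in E R r y" using rt yz(2) .
      ultimately have "same_scc E R r y" by (simp add: same_scc_def)
      then show False using yz(3) by simp
    qed
  qed
  moreover have "D = ?C" if D: "initial_comp E R D" for D
  proof -
    obtain d where dR: "d \<in> R" and Dd: "D = {v. same_scc E R d v}"
      using D by (auto simp: initial_comp_def is_scc_def)
    have noe: "\<not> (\<exists>u v. (u, v) \<in> E \<and> u \<in> R - D \<and> v \<in> D)" using D by (simp add: initial_comp_def)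
    have dD: "d \<in> D" using Dd dR same_scc_refl by fast
    have rd: "(r,d) \<in> (E \<inter> R \<times> R)\<^sup>*" using rt[OF dR] by (simp add: reach_in_def)
    have "r \<in> D"
    proof (rule ccontr)
      assume "r \<notin> D"
      from enter_lemma[OF rd this dD] noe show False by blast
    qed
    then have drr: "same_scc E R d r" using Dd by simp
    show ?thesis
    proof (rule set_eqI)
      fix x
      show "x \<in> D \<longleftrightarrow> x \<in> ?C"
      proof
        assume "x \<in> D"
        then have "same_scc E R d x" using Dd by simp
        then have "same_scc E R r x" by (rule same_scc_trans[OF same_scc_sym[OF drr]])
        then show "x \<in> ?C" by simp
      next
        assume "x \<in> ?C"
        then have "same_scc E R r x" by simp
        then have "same_scc E R d x" by (rule same_scc_trans[OF drr])
        then show "x \<in> D" using Dd by simp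
      qed
    qed
  qed
  ultimately show ?thesis by blast
qed

lemma initial_root:
  assumes fin: "finite R" and ne: "R \<noteq> {}" and u: "\<exists>!C. initial_comp E R C"
  shows "\<exists>r. is_root E R r"
proof -
  obtain C where C: "initial_comp E R C" using u by blast
  obtain c where cR: "c \<in> R" and Cc: "C = {v. same_scc E R c v}"
    using C by (auto simp: initial_comp_def is_scc_def)
  have "reach_in E R c v" if vR: "v \<in> R" for v
  proof -
    let ?anc = "\<lambda>x. {y. reach_in E R y x}"
    let ?P = "\<lambda>x. x \<in> R \<and> reach_in E R x v"
    define x where "x = arg_min (\<lambda>x. card (?anc x)) ?P"
    have Pv: "?P v" using vR reach_in_refl by fast
    have Px: "?P x" unfolding x_def by (rule arg_min_natI[of ?P v, OF Pv])
    have minx: "\<And>y. ?P y \<Longrightarrow> card (?anc x) \<le> card (?anc y)"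
      unfolding x_def by (rule arg_min_nat_le)
    let ?D = "{y. same_scc E R x y}"
    have "initial_comp E R ?D"
      unfolding initial_comp_def is_scc_def
    proof (intro conjI)
      show "\<exists>u\<in>R. ?D = {v. same_scc E R u v}" using Px by blast
      show "\<not> (\<exists>u v. (u, v) \<in> E \<and> u \<in> R - ?D \<and> v \<in> ?D)"
      proof
        assume "\<exists>u v. (u, v) \<in> E \<and> u \<in> R - ?D \<and> v \<in> ?D"
        then obtain y z where yz: "(y,z) \<in> E" "y \<in> R" "y \<notin> ?D" "same_scc E R x z" by blast
        have yx: "reach_in E R y x" using yz(1,2,4) by (rule edge_scc_back)
        have Py: "?P y" using Px yz(2) reach_in_trans[OF yx] by simp
        have sub: "?anc y \<subseteq> ?anc x" using yx reach_in_trans by fast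
        have "x \<in> ?anc x" using Px reach_in_refl by fast
        moreover have "x \<notin> ?anc y"
        proof
          assume "x \<in> ?anc y"
          then have "same_scc E R x y" using yx by (simp add: same_scc_def)
          then show False using yz(3) by simp
        qed
        ultimately have "?anc y \<subset> ?anc x" using sub by blast
        moreover have "finite (?anc x)" using fin by (rule rev_finite_subset) (auto dest: reach_in_mem)
        ultimately have "card (?anc y) < card (?anc x)" by (rule psubset_card_mono[rotated])
        then show False using minx[OF Py] by simp
      qed
    qed
    note iD = this
    from u obtain C0 where h: "\<And>A. initial_comp E R A \<Longrightarrow> A = C0" by blast
    have "?D = C" using h[OF iD] h[OF C] by simp
    moreover have "x \<in> ?D" using Px same_scc_refl by fast
    ultimately have "x \<in> C" by simp
    then have "same_scc E R c x" using Cc by simp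
    then have "reach_in E R c x" by (simp add: same_scc_def)
    then show ?thesis using Px reach_in_trans by fast
  qed
  then show ?thesis using cR by (auto simp: is_root_def)
qed



definition fd :: "'a list \<Rightarrow> 'a list" where "fd xs = rev (remdups (rev xs))"

lemma fd_Nil[simp]: "fd [] = []" by (simp add: fd_def)

lemma fd_snoc: "fd (xs @ [x]) = (if x \<in> set xs then fd xs else fd xs @ [x])"
  by (simp add: fd_def)

lemma set_fd[simp]: "set (fd xs) = set xs" by (simp add: fd_def)

lemma distinct_fd[simp]: "distinct (fd xs)" by (simp add: fd_def)

lemma length_fd: "length (fd xs) \<le> length xs"
  by (metis fd_def length_remdups_leq length_rev)

lemma fd_append: "fd (xs @ ys) = fd xs @ fd (filter (\<lambda>y. y \<notin> set xs) ys)"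
proof (induct ys rule: rev_induct)
  case Nil then show ?case by simp
next
  case (snoc y ys)
  show ?case
  proof (cases "y \<in> set xs")
    case True
    then have "y \<in> set (xs @ ys)" by simp
    then have "fd ((xs @ ys) @ [y]) = fd (xs @ ys)" by (simp only: fd_snoc if_True)
    then show ?thesis using snoc True by simp
  next
    case False
    let ?f = "filter (\<lambda>y. y \<notin> set xs) ys"
    have fl: "filter (\<lambda>y. y \<notin> set xs) (ys @ [y]) = ?f @ [y]" using False by simp
    show ?thesis
    proof (cases "y \<in> set ys")
      case True
      then have "y \<in> set (xs @ ys)" "y \<in> set ?f" using False by auto
      then have "fd ((xs @ ys) @ [y]) = fd (xs @ ys)" "fd (?f @ [y]) = fd ?f"
        by (simp_all only: fd_snoc if_True)
      then show ?thesis using snoc fl by simp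
    next
      case F2: False
      then have "y \<notin> set (xs @ ys)" "y \<notin> set ?f" using False by auto
      then have "fd ((xs @ ys) @ [y]) = fd (xs @ ys) @ [y]" "fd (?f @ [y]) = fd ?f @ [y]"
        by (simp_all only: fd_snoc if_False)
      then show ?thesis using snoc fl by simp
    qed
  qed
qed

lemma distinct_single:
  assumes "distinct l" "set l = {a}" shows "l = [a]"
proof (cases l)
  case Nil then show ?thesis using assms by simp
next
  case (Cons b t)
  then have "b = a" using assms(2) by auto
  have h: "set t \<subseteq> {a}" "a \<notin> set t" using assms Cons \<open>b = a\<close> by auto
  have "set t = {}" using h by (auto simp: subset_singleton_iff)
  then show ?thesis using Cons \<open>b = a\<close> by simp
qed

lemma fd_add:
  assumes "a \<notin> set xs" "set (xs @ ys) = insert a (set xs)"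
  shows "fd (xs @ ys) = fd xs @ [a]"
proof -
  have "set (filter (\<lambda>y. y \<notin> set xs) ys) = {a}" using assms by auto
  then have "fd (filter (\<lambda>y. y \<notin> set xs) ys) = [a]"
    by (intro distinct_single) auto
  then show ?thesis by (simp add: fd_append)
qed

lemma move_cases:
  assumes "prefix X Xn \<or> prefix Xn X" "card ((set X - set Xn) \<union> (set Xn - set X)) = 1"
  shows "\<exists>a. (a \<notin> set X \<and> set Xn = insert a (set X) \<and> fd Xn = fd X @ [a] \<and> prefix X Xn)
          \<or> (a \<notin> set Xn \<and> set X = insert a (set Xn) \<and> fd X = fd Xn @ [a] \<and> prefix Xn X)"
  using assms(1)
proof
  assume p: "prefix X Xn"
  then obtain ys where ys: "Xn = X @ ys" by (auto simp: prefix_def)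
  then have "(set X - set Xn) \<union> (set Xn - set X) = set Xn - set X" by auto
  then have "card (set Xn - set X) = 1" using assms(2) by simp
  then obtain a where a: "set Xn - set X = {a}" by (rule card_1_singletonE)
  then have an: "a \<notin> set X" and s: "set (X @ ys) = insert a (set X)" using ys by auto
  have "fd Xn = fd X @ [a]" using fd_add[OF an s] ys by simp
  then have "a \<notin> set X \<and> set Xn = insert a (set X) \<and> fd Xn = fd X @ [a] \<and> prefix X Xn"
    using an s ys p by simp
  then show ?thesis by blast
next
  assume p: "prefix Xn X"
  then obtain ys where ys: "X = Xn @ ys" by (auto simp: prefix_def)
  then have "(set X - set Xn) \<union> (set Xn - set X) = set X - set Xn" by auto
  then have "card (set X - set Xn) = 1" using assms(2) by simp
  then obtain a where a: "set X - set Xn = {a}" by (rule card_1_singletonE)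
  then have an: "a \<notin> set Xn" and s: "set (Xn @ ys) = insert a (set Xn)" using ys by auto
  have "fd X = fd Xn @ [a]" using fd_add[OF an s] ys by simp
  then have "a \<notin> set Xn \<and> set X = insert a (set Xn) \<and> fd X = fd Xn @ [a] \<and> prefix Xn X"
    using an s ys p by simp
  then show ?thesis by blast
qed

lemma take_remove:
  assumes "X \<noteq> []" shows "\<exists>a\<in>set X. \<exists>n. set (take n X) = set X - {a}"
  using assms
proof (induct X rule: rev_induct)
  case Nil then show ?case by simp
next
  case (snoc x xs)
  show ?case
  proof (cases "x \<in> set xs")
    case False
    then have "set (take (length xs) (xs @ [x])) = set (xs @ [x]) - {x}" by auto
    moreover have "x \<in> set (xs @ [x])" by simp
    ultimately show ?thesis by blast
  next
    case True
    then have "xs \<noteq> []" by auto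
    then obtain a n where a: "a \<in> set xs" "set (take n xs) = set xs - {a}" using snoc by blast
    have "n < length xs"
    proof (rule ccontr)
      assume "\<not> n < length xs"
      then have "take n xs = xs" by simp
      then show False using a by auto
    qed
    then have "take n (xs @ [x]) = take n xs" by simp
    then have "set (take n (xs @ [x])) = set (xs @ [x]) - {a}" using a True by (simp add: insert_absorb)
    moreover have "a \<in> set (xs @ [x])" using a by simp
    ultimately show ?thesis by blast
  qed
qed



lemma start_adm: "admissible g V E [] V"
proof (cases "is_pos g V E [] V")
  case True then show ?thesis by (simp add: admissible_def)
next
  case False
  have "g \<noteq> GI"
  proof
    assume "g = GI"
    then have "is_pos g V E [] V" by (simp add: is_pos_def succ_closed_def)
    then show False using False by simp
  qed
  moreover have "g \<noteq> GISC"
  proof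
    assume "g = GISC"
    then have "is_pos g V E [] V" unfolding is_pos_def using same_scc_mem by fastforce
    then show False using False by simp
  qed
  ultimately have "g \<in> {GV, GVSC}" by (cases g) auto
  then show ?thesis using False by (simp add: admissible_def special_def)
qed

lemma succ_pos: "is_succ g V E p p' \<Longrightarrow> is_pos g V E (fst p') (snd p')"
  unfolding is_succ_def by (cases p; cases p'; auto split: if_splits)

lemma succ_adm: "is_succ g V E p p' \<Longrightarrow> admissible g V E (fst p') (snd p')"
  using succ_pos admissible_def by metis

lemma pos_sub: "is_pos g V E X R \<Longrightarrow> set X \<subseteq> V \<and> R \<subseteq> V - set X"
  unfolding is_pos_def by simp

lemma adm_sub: "admissible g V E X R \<Longrightarrow> set X \<subseteq> V \<and> R \<subseteq> V"
  unfolding admissible_def special_def using pos_sub by fastforce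

lemma empty_stays:
  assumes "is_succ g V E (X, {}) (X', R')" "V \<noteq> {}" shows "R' = {}"
proof -
  have "\<not> special g V E X {}" using assms(2) by (simp add: special_def)
  then show ?thesis using assms(1) unfolding is_succ_def by (auto split: if_splits)
qed

lemma special_succ:
  assumes "is_succ g V E (X,R) (X', R')" "special g V E X R"
  shows "X' = [] \<and> X = [] \<and> R = V"
  using assms unfolding is_succ_def special_def by auto

lemma nonspecial_succ:
  assumes "is_succ g V E (X,R) (X', R')" "\<not> special g V E X R"
  shows "is_pos g V E X' R' \<and> (prefix X X' \<or> prefix X' X) \<and>
           card ((set X - set X') \<union> (set X' - set X)) = 1 \<and>
           (if g \<in> {GI, GV}
            then (\<forall>v'\<in>R'. \<exists>v\<in>R. reach_in E (V - (set X \<inter> set X')) v v')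
            else (\<forall>v'\<in>R'. \<exists>v\<in>R. same_scc E (V - (set X \<inter> set X')) v v'))"
  using assms unfolding is_succ_def by auto

locale simG =
  fixes g :: gvar and V :: "'a set" and E :: "('a \<times> 'a) set"
    and \<sigma> :: "'a list \<times> 'a set \<Rightarrow> 'a list" and k :: nat
  assumes finV: "finite V" and neV: "V \<noteq> {}"
    and strat: "strategy g V E \<sigma>"
    and win: "all_complete g V E \<sigma> winning_search"
    and bnd: "all_complete g V E \<sigma> (bounded_search k)"
begin

definition stepG where "stepG L L2 \<longleftrightarrow> is_succ g V E L L2 \<and> fst L2 = \<sigma> L"

inductive reachG where
  start: "reachG ([], V)"
| step: "reachG L \<Longrightarrow> stepG L L2 \<Longrightarrow> reachG L2"

lemma reach_adm: "reachG L \<Longrightarrow> admissible g V E (fst L) (snd L)"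
  by (induct rule: reachG.induct) (auto simp: start_adm stepG_def dest: succ_adm)

lemma strat_succ: "admissible g V E (fst L) (snd L) \<Longrightarrow> \<exists>R'. is_succ g V E L (\<sigma> L, R')"
  using strat unfolding strategy_def by (cases L) auto

definition nxt where "nxt p = (\<sigma> p, SOME R. is_succ g V E p (\<sigma> p, R))"

lemma nxt_succ: "admissible g V E (fst p) (snd p) \<Longrightarrow> is_succ g V E p (nxt p)"
  unfolding nxt_def using strat_succ someI_ex by metis

lemma nxt_adm: "admissible g V E (fst p) (snd p) \<Longrightarrow> admissible g V E (fst (nxt p)) (snd (nxt p))"
  using nxt_succ succ_adm by metis

lemma cons_adm:
  assumes "cons_search g V E \<sigma> s N" "enat i < N"
  shows "admissible g V E (fst (s i)) (snd (s i))"
  using assms(2)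
proof (induct i)
  case 0 then show ?case using assms(1) start_adm by (simp add: cons_search_def)
next
  case (Suc i) then show ?case using assms(1) succ_adm unfolding cons_search_def by blast
qed

lemma ext_inf:
  assumes cs: "cons_search g V E \<sigma> s (enat (Suc n))"
  shows "\<exists>t. cons_search g V E \<sigma> t \<infinity> \<and> (\<forall>i\<le>n. t i = s i)"
proof -
  define t where "t i = (if i \<le> n then s i else (nxt ^^ (i - n)) (s n))" for i
  have an: "admissible g V E (fst (s n)) (snd (s n))" using cons_adm[OF cs] by simp
  have aj: "admissible g V E (fst ((nxt ^^ j) (s n))) (snd ((nxt ^^ j) (s n)))" for j
    by (induct j) (auto simp: an nxt_adm)
  have "cons_search g V E \<sigma> t \<infinity>"
    unfolding cons_search_def
  proof (intro conjI allI impI)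
    show "1 \<le> (\<infinity>::enat)" by simp
    show "t 0 = ([], V)" using cs by (simp add: t_def cons_search_def)
    fix i
    have "is_succ g V E (t i) (t (Suc i)) \<and> fst (t (Suc i)) = \<sigma> (t i)"
    proof (cases "Suc i \<le> n")
      case True
      then have "enat (Suc i) < enat (Suc n)" by simp
      then show ?thesis using cs True by (simp add: t_def cons_search_def)
    next
      case False
      then have e: "Suc i - n = Suc (i - n)" by simp
      have ti: "t i = (nxt ^^ (i - n)) (s n)" using False by (cases "i = n") (auto simp: t_def)
      have tsi: "t (Suc i) = nxt ((nxt ^^ (i - n)) (s n))" using False e by (simp add: t_def)
      show ?thesis using nxt_succ[OF aj[of "i - n"]] ti tsi by (simp add: nxt_def)
    qed
    then show "is_succ g V E (t i) (t (Suc i))" "fst (t (Suc i)) = \<sigma> (t i)" by auto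
  qed
  then show ?thesis by (auto simp: t_def)
qed

lemma seq_extend:
  assumes sn: "cons_search g V E \<sigma> s (enat (Suc n))" and st: "stepG (s n) L2"
  shows "cons_search g V E \<sigma> (s(Suc n := L2)) (enat (Suc (Suc n)))"
  unfolding cons_search_def
proof (intro conjI allI impI)
  let ?s = "s(Suc n := L2)"
  show "1 \<le> enat (Suc (Suc n))" by (simp add: one_enat_def)
  show "?s 0 = ([], V)" using sn by (simp add: cons_search_def)
  fix i assume i: "enat (Suc i) < enat (Suc (Suc n))"
  have "is_succ g V E (?s i) (?s (Suc i)) \<and> fst (?s (Suc i)) = \<sigma> (?s i)"
  proof (cases "i = n")
    case True then show ?thesis using st by (simp add: stepG_def)
  next
    case False
    then have "enat (Suc i) < enat (Suc n)" using i by simp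
    then show ?thesis using sn False i by (simp add: cons_search_def)
  qed
  then show "is_succ g V E (?s i) (?s (Suc i))" "fst (?s (Suc i)) = \<sigma> (?s i)" by auto
qed

lemma reach_seq: "reachG L \<Longrightarrow> \<exists>s n. cons_search g V E \<sigma> s (enat (Suc n)) \<and> s n = L"
proof (induct rule: reachG.induct)
  case start
  have "cons_search g V E \<sigma> (\<lambda>_. ([], V)) (enat (Suc 0))" by (simp add: cons_search_def one_enat_def)
  then show ?case by blast
next
  case (step L L2)
  then obtain s n where sn: "cons_search g V E \<sigma> s (enat (Suc n))" "s n = L" by blast
  have "cons_search g V E \<sigma> (s(Suc n := L2)) (enat (Suc (Suc n)))"
    using seq_extend sn step by blast
  moreover have "(s(Suc n := L2)) (Suc n) = L2" by simp
  ultimately show ?case by blast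
qed

lemma reach_inf: "reachG L \<Longrightarrow> \<exists>t n. cons_search g V E \<sigma> t \<infinity> \<and> t n = L"
  using reach_seq ext_inf by (metis order_refl)

lemma reach_inf2:
  assumes "reachG L" "stepG L L2"
  shows "\<exists>t n. cons_search g V E \<sigma> t \<infinity> \<and> t n = L \<and> t (Suc n) = L2"
proof -
  obtain s n where sn: "cons_search g V E \<sigma> s (enat (Suc n))" "s n = L"
    using reach_seq assms(1) by blast
  have "cons_search g V E \<sigma> (s(Suc n := L2)) (enat (Suc (Suc n)))"
    using seq_extend sn assms by blast
  then obtain t where t: "cons_search g V E \<sigma> t \<infinity>" "\<forall>i\<le>Suc n. t i = (s(Suc n := L2)) i"
    using ext_inf by blast
  then show ?thesis using sn by (intro exI[of _ t] exI[of _ n]) auto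
qed

lemma reach_len: "reachG L \<Longrightarrow> length (fst L) \<le> k"
  using reach_inf bnd unfolding all_complete_def complete_def bounded_search_def by fastforce

lemma reach_sub: "reachG L \<Longrightarrow> set (fst L) \<subseteq> V \<and> snd L \<subseteq> V"
  using reach_adm adm_sub by blast

lemma finite_reach: "finite {L. reachG L}"
proof -
  have "{L. reachG L} \<subseteq> {xs. set xs \<subseteq> V \<and> length xs \<le> k} \<times> Pow V"
    using reach_len reach_sub by fastforce
  moreover have "finite ({xs. set xs \<subseteq> V \<and> length xs \<le> k} \<times> Pow V)"
    using finV finite_lists_length_le by blast
  ultimately show ?thesis using finite_subset by blast
qed

lemma no_chain:
  assumes f0: "reachG (f 0)" and ch: "\<And>i. snd (f i) \<noteq> {} \<and> stepG (f i) (f (Suc i))"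
  shows False
proof -
  obtain s n where sn: "cons_search g V E \<sigma> s (enat (Suc n))" "s n = f 0"
    using reach_seq f0 by blast
  define t where "t i = (if i \<le> n then s i else f (i - n))" for i
  have cs: "cons_search g V E \<sigma> t \<infinity>"
    unfolding cons_search_def
  proof (intro conjI allI impI)
    show "1 \<le> (\<infinity>::enat)" by simp
    show "t 0 = ([], V)" using sn by (simp add: t_def cons_search_def)
    fix i
    have "is_succ g V E (t i) (t (Suc i)) \<and> fst (t (Suc i)) = \<sigma> (t i)"
    proof (cases "Suc i \<le> n")
      case True
      then have "enat (Suc i) < enat (Suc n)" by simp
      then show ?thesis using sn True by (simp add: t_def cons_search_def)
    next
      case False
      then have e: "Suc i - n = Suc (i - n)" by simp
      have "t i = f (i - n)" using False sn by (cases "i = n") (auto simp: t_def)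
      moreover have "t (Suc i) = f (Suc (i - n))" using False e by (simp add: t_def)
      ultimately show ?thesis using ch[of "i - n"] by (simp add: stepG_def)
    qed
    then show "is_succ g V E (t i) (t (Suc i))" "fst (t (Suc i)) = \<sigma> (t i)" by auto
  qed
  have "winning_search t \<infinity>" using win cs unfolding all_complete_def complete_def by blast
  then obtain i where i: "snd (t i) = {}" unfolding winning_search_def by blast
  have stay: "snd (t (i + j)) = {}" for j
  proof (induct j)
    case 0 then show ?case using i by simp
  next
    case (Suc j)
    have "is_succ g V E (t (i + j)) (t (Suc (i + j)))" using cs by (simp add: cons_search_def)
    then show ?case using empty_stays[of g V E "fst (t (i+j))" "fst (t (Suc (i+j)))" "snd (t (Suc (i+j)))"]
      Suc neV by (metis add_Suc_right prod.collapse)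
  qed
  show False
  proof (cases "i \<le> n")
    case True
    then have "snd (t n) = {}" using stay[of "n - i"] by simp
    then show False using ch[of 0] sn by (simp add: t_def)
  next
    case False
    then show False using i ch[of "i - n"] by (simp add: t_def)
  qed
qed

definition S where "S = {(L, L2). reachG L \<and> snd L \<noteq> {} \<and> stepG L L2}"

lemma wfS: "wf (S\<inverse>)"
proof (rule ccontr)
  assume "\<not> wf (S\<inverse>)"
  then obtain f where f: "\<And>i. (f (Suc i), f i) \<in> S\<inverse>" using wf_iff_no_infinite_down_chain by blast
  then have "reachG (f 0)" "\<And>i. snd (f i) \<noteq> {} \<and> stepG (f i) (f (Suc i))"
    by (auto simp: S_def)
  then show False by (rule no_chain)
qed

lemma S_acyc: "(x, x) \<notin> S\<^sup>+"
proof
  assume "(x, x) \<in> S\<^sup>+"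
  then have "(x, x) \<in> (S\<inverse>)\<^sup>+" by (simp add: trancl_converse)
  moreover have "acyclic (S\<inverse>)" using wfS by (rule wf_acyclic)
  ultimately show False unfolding acyclic_def by blast
qed

lemma S_reach: "(x, y) \<in> S\<^sup>+ \<Longrightarrow> reachG y"
proof (induct rule: trancl_induct)
  case (base y) then show ?case unfolding S_def using reachG.step by blast
next
  case (step y z) then show ?case unfolding S_def using reachG.step by blast
qed

definition ht where "ht L = card {L2. (L, L2) \<in> S\<^sup>+}"

lemma ht_dec:
  assumes "reachG L" "snd L \<noteq> {}" "stepG L L2"
  shows "ht L2 < ht L"
proof -
  have LS: "(L, L2) \<in> S" using assms by (simp add: S_def)
  have sub: "{x. (L2, x) \<in> S\<^sup>+} \<subseteq> {x. (L, x) \<in> S\<^sup>+}"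
  proof
    fix x assume "x \<in> {x. (L2, x) \<in> S\<^sup>+}"
    then have "(L2, x) \<in> S\<^sup>+" by simp
    then show "x \<in> {x. (L, x) \<in> S\<^sup>+}" using trancl_into_trancl2[OF LS] by simp
  qed
  have "L2 \<in> {x. (L, x) \<in> S\<^sup>+}" using LS by auto
  moreover have "L2 \<notin> {x. (L2, x) \<in> S\<^sup>+}" using S_acyc by auto
  ultimately have "{x. (L2, x) \<in> S\<^sup>+} \<subset> {x. (L, x) \<in> S\<^sup>+}" using sub by blast
  moreover have "finite {x. (L, x) \<in> S\<^sup>+}"
    using finite_reach by (rule rev_finite_subset) (auto dest: S_reach)
  ultimately show ?thesis unfolding ht_def by (rule psubset_card_mono[rotated])
qed

lemma mono_G:
  assumes "all_complete g V E \<sigma> monotone_search" "reachG L" "stepG L L2"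
  shows "snd L2 \<subseteq> snd L"
proof -
  obtain t n where "cons_search g V E \<sigma> t \<infinity>" "t n = L" "t (Suc n) = L2"
    using reach_inf2 assms(2,3) by blast
  then show ?thesis using assms(1) unfolding all_complete_def complete_def monotone_search_def
    by fastforce
qed

lemma stat_G:
  assumes "all_complete g V E \<sigma> stationary_search" "reachG L" "stepG L L2" "snd L \<noteq> {}"
  shows "prefix (fst L) (fst L2)"
proof -
  obtain t n where "cons_search g V E \<sigma> t \<infinity>" "t n = L" "t (Suc n) = L2"
    using reach_inf2 assms(2,3) by blast
  then show ?thesis using assms(1,4) unfolding all_complete_def complete_def stationary_search_def
    by fastforce
qed

lemma k_pos: "1 \<le> k"
proof -
  let ?L0 = "([], V) :: 'a list \<times> 'a set"
  obtain R where R: "is_succ g V E ?L0 (\<sigma> ?L0, R)" using strat_succ start_adm by fastforce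
  have r1: "reachG (\<sigma> ?L0, R)" using R reachG.start reachG.step stepG_def by fastforce
  show ?thesis
  proof (cases "\<sigma> ?L0 = []")
    case False
    then show ?thesis using reach_len[OF r1] by (cases "\<sigma> ?L0") auto
  next
    case True
    have sp: "special g V E [] V"
    proof (rule ccontr)
      assume "\<not> special g V E [] V"
      then have "card ((set [] - set (\<sigma> ?L0)) \<union> (set (\<sigma> ?L0) - set [])) = 1"
        using nonspecial_succ[OF R] by blast
      then show False using True by simp
    qed
    have pR: "is_pos g V E [] R" using R sp True special_succ by (auto simp: is_succ_def)
    have nsp: "\<not> special g V E [] R" using pR sp by (auto simp: special_def)
    have a1: "admissible g V E [] R" using pR by (simp add: admissible_def)
    obtain R2 where R2: "is_succ g V E ([], R) (\<sigma> ([], R), R2)"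
      using strat_succ[of "([], R)"] a1 by auto
    have r2: "reachG (\<sigma> ([], R), R2)" using r1 True R2 reachG.step stepG_def by fastforce
    have "card ((set [] - set (\<sigma> ([], R))) \<union> (set (\<sigma> ([], R)) - set [])) = 1"
      using nonspecial_succ[OF R2 nsp] by blast
    then have "\<sigma> ([], R) \<noteq> []" by auto
    then show ?thesis using reach_len[OF r2] by (cases "\<sigma> ([], R)") auto
  qed
qed

end



lemma is_succ_I:
  "\<not> special g V E X R \<Longrightarrow> is_pos g V E X' R' \<Longrightarrow> (prefix X X' \<or> prefix X' X) \<Longrightarrow>
   card ((set X - set X') \<union> (set X' - set X)) = 1 \<Longrightarrow>
   (if g \<in> {GI, GV}
            then (\<forall>v'\<in>R'. \<exists>v\<in>R. reach_in E (V - (set X \<inter> set X')) v v')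
            else (\<forall>v'\<in>R'. \<exists>v\<in>R. same_scc E (V - (set X \<inter> set X')) v v')) \<Longrightarrow>
   is_succ g V E (X, R) (X', R')"
  by (simp add: is_succ_def)

lemma is_succ_special_I:
  "special g V E X R \<Longrightarrow> is_pos g V E [] R' \<Longrightarrow> is_succ g V E (X, R) ([], R')"
  by (simp add: is_succ_def)

locale sim2 = simG g V E \<sigma> k for g V E \<sigma> k +
  fixes V' E'
  assumes sub: "subgraph V' E' V E"
begin

lemma VV: "V' \<subseteq> V" and EE: "E' \<subseteq> E" and finV': "finite V'" and neV': "V' \<noteq> {}"
  using sub by (auto simp: subgraph_def digraph_def)

definition proj where "proj X = filter (\<lambda>v. v \<in> V') (fd X)"

lemma set_proj: "set (proj X) = set X \<inter> V'" by (auto simp: proj_def)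
lemma distinct_proj: "distinct (proj X)" by (simp add: proj_def)
lemma length_proj: "length (proj X) \<le> length X"
proof -
  have "length (proj X) \<le> length (fd X)" unfolding proj_def by (rule length_filter_le)
  then show ?thesis using length_fd[of X] by linarith
qed

definition Rel where "Rel L p \<longleftrightarrow> proj (fst L) = fst p \<and> snd p \<subseteq> snd L"

definition resp where
  "resp X R' = (if g \<in> {GI, GV} then {v. \<exists>u\<in>R'. reach_in E (V - set X) u v}
                else {v. \<exists>u\<in>R'. same_scc E (V - set X) u v})"

definition vmove where "vmove L \<longleftrightarrow> set (\<sigma> L) \<inter> V' \<noteq> set (fst L) \<inter> V'"

lemma resp_sub: "resp X R' \<subseteq> V - set X"
proof (cases "g \<in> {GI, GV}")
  case True
  then have "resp X R' = {v. \<exists>u\<in>R'. reach_in E (V - set X) u v}" by (simp add: resp_def)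
  then show ?thesis using reach_in_mem by fastforce
next
  case False
  then have "resp X R' = {v. \<exists>u\<in>R'. same_scc E (V - set X) u v}" by (simp add: resp_def)
  then show ?thesis using same_scc_mem by fastforce
qed

lemma resp_sup: "R' \<subseteq> V - set X \<Longrightarrow> R' \<subseteq> resp X R'"
proof (cases "g \<in> {GI, GV}")
  case True
  assume a: "R' \<subseteq> V - set X"
  have "resp X R' = {v. \<exists>u\<in>R'. reach_in E (V - set X) u v}" using True by (simp add: resp_def)
  show ?thesis
  proof
    fix x assume "x \<in> R'"
    then have "x \<in> R'" "reach_in E (V - set X) x x" using a reach_in_refl[of x "V - set X" E] by auto
    then show "x \<in> resp X R'" using \<open>resp X R' = _\<close> by blast
  qed
next
  case False
  assume a: "R' \<subseteq> V - set X"
  have "resp X R' = {v. \<exists>u\<in>R'. same_scc E (V - set X) u v}" using False by (simp add: resp_def)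
  show ?thesis
  proof
    fix x assume "x \<in> R'"
    then have "x \<in> R'" "same_scc E (V - set X) x x" using a same_scc_refl[of x "V - set X" E] by auto
    then show "x \<in> resp X R'" using \<open>resp X R' = _\<close> by blast
  qed
qed

lemma W_sub:
  assumes "set X \<inter> V' = set X'" "set Xn \<inter> V' = set X'n"
  shows "V' - (set X' \<inter> set X'n) \<subseteq> V - (set X \<inter> set Xn)"
  using assms VV by auto

lemma resp_pos_gen:
  assumes VV: "V1 \<subseteq> V" and EE: "E1 \<subseteq> E" and finV1: "finite V1"
    and pos: "is_pos g V1 E1 X' R'" and XV: "set X \<subseteq> V" and W'W: "V1 - set X' \<subseteq> V - set X"
  shows "is_pos g V E X (resp X R')"
proof -
  have R'sub: "R' \<subseteq> V1 - set X'" using pos by (simp add: is_pos_def)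
  define RR where "RR = resp X R'"
  have rr1: "g \<in> {GI, GV} \<Longrightarrow> RR = {v. \<exists>u\<in>R'. reach_in E (V - set X) u v}"
    unfolding RR_def resp_def by simp
  have rr2: "g \<notin> {GI, GV} \<Longrightarrow> RR = {v. \<exists>u\<in>R'. same_scc E (V - set X) u v}"
    unfolding RR_def resp_def by simp
  have RRsub: "RR \<subseteq> V - set X" unfolding RR_def by (rule resp_sub)
  have RRsup: "R' \<subseteq> RR" unfolding RR_def using resp_sup[of R' X] R'sub W'W by blast
  have base: "set X \<subseteq> V \<and> RR \<subseteq> V - set X" using XV RRsub by blast
  have "is_pos g V E X RR"
  proof (cases g)
    case GI
    have rr: "RR = {v. \<exists>u\<in>R'. reach_in E (V - set X) u v}" using rr1 GI by simp
    have "succ_closed E (V - set X) RR"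
      unfolding succ_closed_def
    proof (intro conjI)
      show "RR \<subseteq> V - set X" by (rule RRsub)
      show "\<not> (\<exists>u v. (u, v) \<in> E \<and> u \<in> RR \<and> v \<in> V - set X - RR)"
      proof
        assume "\<exists>u v. (u, v) \<in> E \<and> u \<in> RR \<and> v \<in> V - set X - RR"
        then obtain u v where uv: "(u,v) \<in> E" "u \<in> RR" "v \<in> V - set X" "v \<notin> RR" by blast
        from uv(2) rr obtain w where w: "w \<in> R'" "reach_in E (V - set X) w u" by auto
        have "u \<in> V - set X" using reach_in_mem[OF w(2)] by simp
        then have "reach_in E (V - set X) u v" using uv(1,3) by (intro reach_in_edge)
        then have "reach_in E (V - set X) w v" by (rule reach_in_trans[OF w(2)])
        then have "v \<in> RR" using w(1) rr by auto
        then show False using uv(4) by simp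
      qed
    qed
    then show ?thesis using base GI by (simp add: is_pos_def)
  next
    case GISC
    have rr: "RR = {v. \<exists>u\<in>R'. same_scc E (V - set X) u v}" using rr2 GISC by simp
    have "\<forall>v\<in>RR. {u. same_scc E (V - set X) v u} \<subseteq> RR"
    proof (intro ballI subsetI)
      fix v u assume v: "v \<in> RR" and u: "u \<in> {u. same_scc E (V - set X) v u}"
      from v rr obtain w where w: "w \<in> R'" "same_scc E (V - set X) w v" by auto
      have "same_scc E (V - set X) v u" using u by simp
      then have "same_scc E (V - set X) w u" by (rule same_scc_trans[OF w(2)])
      then show "u \<in> RR" using w(1) rr by auto
    qed
    then show ?thesis using base GISC by (simp add: is_pos_def)
  next
    case GV
    have rr: "RR = {v. \<exists>u\<in>R'. reach_in E (V - set X) u v}" using rr1 GV by simp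
    have sc: "succ_closed E (V - set X) RR"
      unfolding succ_closed_def
    proof (intro conjI)
      show "RR \<subseteq> V - set X" by (rule RRsub)
      show "\<not> (\<exists>u v. (u, v) \<in> E \<and> u \<in> RR \<and> v \<in> V - set X - RR)"
      proof
        assume "\<exists>u v. (u, v) \<in> E \<and> u \<in> RR \<and> v \<in> V - set X - RR"
        then obtain u v where uv: "(u,v) \<in> E" "u \<in> RR" "v \<in> V - set X" "v \<notin> RR" by blast
        from uv(2) rr obtain w where w: "w \<in> R'" "reach_in E (V - set X) w u" by auto
        have "u \<in> V - set X" using reach_in_mem[OF w(2)] by simp
        then have "reach_in E (V - set X) u v" using uv(1,3) by (intro reach_in_edge)
        then have "reach_in E (V - set X) w v" by (rule reach_in_trans[OF w(2)])
        then have "v \<in> RR" using w(1) rr by auto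
        then show False using uv(4) by simp
      qed
    qed
    have "RR = {} \<or> (\<exists>!C. initial_comp E RR C)"
    proof (cases "R' = {}")
      case True then show ?thesis using rr by simp
    next
      case False
      have fin: "finite R'" by (rule finite_subset[OF _ finV1]) (use R'sub in blast)
      have pGV: "is_pos GV V1 E1 X' R'" using pos GV by simp
      then have "R' = {} \<or> (\<exists>!C. initial_comp E1 R' C)" unfolding is_pos_def by simp
      then have ex1: "\<exists>!C. initial_comp E1 R' C" using False by simp
      have "\<exists>r. is_root E1 R' r" by (rule initial_root[OF fin False ex1])
      then obtain r where r: "is_root E1 R' r" by blast
      have "is_root E RR r"
        unfolding is_root_def
      proof (intro conjI ballI)
        have "r \<in> R'" using r by (simp add: is_root_def)
        then show "r \<in> RR" using RRsup by blast
        fix v assume "v \<in> RR"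
        then obtain w where w: "w \<in> R'" "reach_in E (V - set X) w v" using rr by auto
        have rw': "reach_in E1 R' r w" using r w(1) by (simp add: is_root_def)
        have rw: "reach_in E RR r w" by (rule reach_in_mono[OF rw' EE RRsup])
        have c1: "reach_in E {y. reach_in E (V - set X) w y} w v" using w(2) by (rule reach_in_self_closure)
        have c2: "{y. reach_in E (V - set X) w y} \<subseteq> RR" using w(1) rr by auto
        have "reach_in E RR w v" by (rule reach_in_mono[OF c1 order_refl c2])
        then show "reach_in E RR r v" by (rule reach_in_trans[OF rw])
      qed
      then have "\<exists>!C. initial_comp E RR C" by (rule root_initial)
      then show ?thesis by simp
    qed
    then show ?thesis using base GV sc by (simp add: is_pos_def)
  next
    case GVSC
    have rr: "RR = {v. \<exists>u\<in>R'. same_scc E (V - set X) u v}" using rr2 GVSC by simp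
    have "RR = {} \<or> is_scc E (V - set X) RR"
    proof (cases "R' = {}")
      case True then show ?thesis using rr by simp
    next
      case False
      then have "is_scc E1 (V1 - set X') R'" using pos GVSC by (simp add: is_pos_def)
      then obtain u where u: "u \<in> V1 - set X'" "R' = {x. same_scc E1 (V1 - set X') u x}"
        by (auto simp: is_scc_def)
      have uR: "u \<in> R'" using u(2) same_scc_refl[OF u(1), of E1] by simp
      have "RR = {v. same_scc E (V - set X) u v}"
      proof (rule set_eqI)
        fix v
        show "v \<in> RR \<longleftrightarrow> v \<in> {v. same_scc E (V - set X) u v}"
        proof
          assume "v \<in> RR"
          then obtain w where w: "w \<in> R'" "same_scc E (V - set X) w v" using rr by auto
          have "same_scc E1 (V1 - set X') u w" using w(1) u(2) by simp
          then have "same_scc E (V - set X) u w" using same_scc_mono[OF _ EE W'W] by blast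
          then have "same_scc E (V - set X) u v" using w(2) by (rule same_scc_trans)
          then show "v \<in> {v. same_scc E (V - set X) u v}" by simp
        next
          assume "v \<in> {v. same_scc E (V - set X) u v}"
          then show "v \<in> RR" using uR rr by auto
        qed
      qed
      moreover have "u \<in> V - set X" using u(1) W'W by blast
      ultimately show ?thesis by (auto simp: is_scc_def)
    qed
    then show ?thesis using base GVSC by (simp add: is_pos_def)
  qed
  then show ?thesis by (simp add: RR_def)
qed

lemma resp_pos:
  assumes pos: "is_pos g V' E' X' R'" and XV: "set X \<subseteq> V" and XX: "set X \<inter> V' = set X'"
  shows "is_pos g V E X (resp X R')"
proof -
  have W'W: "V' - set X' \<subseteq> V - set X" using XX VV by auto
  show ?thesis by (rule resp_pos_gen[OF VV EE finV' pos XV W'W])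
qed

end


context sim2 begin

lemma proj_snoc_fd: "fd Xn = fd X @ [a] \<Longrightarrow> proj Xn = proj X @ (if a \<in> V' then [a] else [])"
  by (simp add: proj_def)

lemma proj_prefix: "prefix X Xn \<Longrightarrow> prefix (proj X) (proj Xn)"
proof -
  assume "prefix X Xn"
  then obtain ys where "Xn = X @ ys" by (auto simp: prefix_def)
  then show ?thesis by (simp add: proj_def fd_append)
qed

lemma move_info:
  assumes "prefix X Xn \<or> prefix Xn X" "card ((set X - set Xn) \<union> (set Xn - set X)) = 1"
  shows "(set Xn \<inter> V' = set X \<inter> V' \<longrightarrow> proj Xn = proj X) \<and>
         (set Xn \<inter> V' \<noteq> set X \<inter> V' \<longrightarrow> (\<exists>a\<in>V'.
            (a \<notin> set X \<and> set Xn = insert a (set X) \<and> proj Xn = proj X @ [a]) \<or>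
            (a \<notin> set Xn \<and> set X = insert a (set Xn) \<and> proj X = proj Xn @ [a])))"
proof -
  obtain a where a: "(a \<notin> set X \<and> set Xn = insert a (set X) \<and> fd Xn = fd X @ [a] \<and> prefix X Xn)
          \<or> (a \<notin> set Xn \<and> set X = insert a (set Xn) \<and> fd X = fd Xn @ [a] \<and> prefix Xn X)"
    using move_cases[OF assms] by blast
  show ?thesis
  proof (cases "a \<in> V'")
    case True
    then have "set Xn \<inter> V' \<noteq> set X \<inter> V'" using a by auto
    moreover have "(a \<notin> set X \<and> set Xn = insert a (set X) \<and> proj Xn = proj X @ [a]) \<or>
            (a \<notin> set Xn \<and> set X = insert a (set Xn) \<and> proj X = proj Xn @ [a])"
      using a True proj_snoc_fd[of Xn X a] proj_snoc_fd[of X Xn a] by auto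
    ultimately show ?thesis using True by blast
  next
    case False
    then have "set Xn \<inter> V' = set X \<inter> V'" using a by auto
    moreover have "proj Xn = proj X"
      using a False proj_snoc_fd[of Xn X a] proj_snoc_fd[of X Xn a] by auto
    ultimately show ?thesis by blast
  qed
qed

lemma skip_cond:
  assumes "R' \<subseteq> R"
  shows "if g \<in> {GI, GV}
            then (\<forall>v'\<in>resp Xn R'. \<exists>v\<in>R. reach_in E (V - (set X \<inter> set Xn)) v v')
            else (\<forall>v'\<in>resp Xn R'. \<exists>v\<in>R. same_scc E (V - (set X \<inter> set Xn)) v v')"
proof -
  have W: "V - set Xn \<subseteq> V - (set X \<inter> set Xn)" by blast
  show ?thesis
  proof (cases "g \<in> {GI, GV}")
    case True
    have "\<exists>v\<in>R. reach_in E (V - (set X \<inter> set Xn)) v v'" if v': "v' \<in> resp Xn R'" for v'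
    proof -
      obtain u where u: "u \<in> R'" "reach_in E (V - set Xn) u v'" using v' True by (auto simp: resp_def)
      have "reach_in E (V - (set X \<inter> set Xn)) u v'" by (rule reach_in_mono[OF u(2) order_refl W])
      then show ?thesis using u(1) assms by blast
    qed
    then show ?thesis using True by simp
  next
    case False
    have "\<exists>v\<in>R. same_scc E (V - (set X \<inter> set Xn)) v v'" if v': "v' \<in> resp Xn R'" for v'
    proof -
      obtain u where u: "u \<in> R'" "same_scc E (V - set Xn) u v'" using v' False by (auto simp: resp_def)
      have "same_scc E (V - (set X \<inter> set Xn)) u v'" by (rule same_scc_mono[OF u(2) order_refl W])
      then show ?thesis using u(1) assms by blast
    qed
    then show ?thesis using False by simp
  qed
qed

lemma cond_lift:
  assumes RR: "R' \<subseteq> R" and W: "V' - (set X' \<inter> set X'n) \<subseteq> V - (set X \<inter> set Xn)"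
    and c: "if g \<in> {GI, GV}
            then (\<forall>v'\<in>R'n. \<exists>v\<in>R'. reach_in E' (V' - (set X' \<inter> set X'n)) v v')
            else (\<forall>v'\<in>R'n. \<exists>v\<in>R'. same_scc E' (V' - (set X' \<inter> set X'n)) v v')"
  shows "if g \<in> {GI, GV}
            then (\<forall>v'\<in>resp Xn R'n. \<exists>v\<in>R. reach_in E (V - (set X \<inter> set Xn)) v v')
            else (\<forall>v'\<in>resp Xn R'n. \<exists>v\<in>R. same_scc E (V - (set X \<inter> set Xn)) v v')"
proof -
  have W2: "V - set Xn \<subseteq> V - (set X \<inter> set Xn)" by blast
  show ?thesis
  proof (cases "g \<in> {GI, GV}")
    case True
    have c': "\<forall>v'\<in>R'n. \<exists>v\<in>R'. reach_in E' (V' - (set X' \<inter> set X'n)) v v'" using c True by simp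
    have "\<exists>v\<in>R. reach_in E (V - (set X \<inter> set Xn)) v v'" if v': "v' \<in> resp Xn R'n" for v'
    proof -
      obtain u where u: "u \<in> R'n" "reach_in E (V - set Xn) u v'" using v' True by (auto simp: resp_def)
      obtain w where w: "w \<in> R'" "reach_in E' (V' - (set X' \<inter> set X'n)) w u" using c' u(1) by blast
      have wu: "reach_in E (V - (set X \<inter> set Xn)) w u" by (rule reach_in_mono[OF w(2) EE W])
      have "reach_in E (V - (set X \<inter> set Xn)) u v'" by (rule reach_in_mono[OF u(2) order_refl W2])
      then have "reach_in E (V - (set X \<inter> set Xn)) w v'" by (rule reach_in_trans[OF wu])
      then show ?thesis using w(1) RR by blast
    qed
    then show ?thesis using True by simp
  next
    case False
    have c': "\<forall>v'\<in>R'n. \<exists>v\<in>R'. same_scc E' (V' - (set X' \<inter> set X'n)) v v'" using c False by simp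
    have "\<exists>v\<in>R. same_scc E (V - (set X \<inter> set Xn)) v v'" if v': "v' \<in> resp Xn R'n" for v'
    proof -
      obtain u where u: "u \<in> R'n" "same_scc E (V - set Xn) u v'" using v' False by (auto simp: resp_def)
      obtain w where w: "w \<in> R'" "same_scc E' (V' - (set X' \<inter> set X'n)) w u" using c' u(1) by blast
      have wu: "same_scc E (V - (set X \<inter> set Xn)) w u" by (rule same_scc_mono[OF w(2) EE W])
      have "same_scc E (V - (set X \<inter> set Xn)) u v'" by (rule same_scc_mono[OF u(2) order_refl W2])
      then have "same_scc E (V - (set X \<inter> set Xn)) w v'" by (rule same_scc_trans[OF wu])
      then show ?thesis using w(1) RR by blast
    qed
    then show ?thesis using False by simp
  qed
qed

lemma sim:
  assumes pos: "is_pos g V' E' X' R'" and ne: "R' \<noteq> {}"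
  shows "reachG L \<Longrightarrow> Rel L (X', R') \<Longrightarrow> \<exists>L1. reachG L1 \<and> Rel L1 (X', R') \<and> ht L1 \<le> ht L \<and>
           vmove L1 \<and> \<not> special g V E (fst L1) (snd L1)"
proof (induct "ht L" arbitrary: L rule: less_induct)
  case less
  obtain X R where L: "L = (X, R)" by (cases L)
  have rL: "reachG L" and rel: "Rel L (X', R')" by fact+
  have PX: "proj X = X'" and RR: "R' \<subseteq> R" using rel L by (auto simp: Rel_def)
  have R'sub: "R' \<subseteq> V' - set X'" using pos by (simp add: is_pos_def)
  have RNE: "R \<noteq> {}" using RR ne by blast
  have adm: "admissible g V E X R" using reach_adm[OF rL] L by simp
  obtain R0 where R0: "is_succ g V E (X, R) (\<sigma> L, R0)" using strat_succ[of L] adm L by auto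
  show ?case
  proof (cases "vmove L \<and> \<not> special g V E X R")
    case True
    then show ?thesis using rL rel L by (intro exI[of _ L]) auto
  next
    case False
    let ?Xn = "\<sigma> L"
    let ?L2 = "(?Xn, resp ?Xn R')"
    have XX': "set X \<inter> V' = set X'" using PX set_proj by metis
    have key: "set ?Xn \<inter> V' = set X' \<and> proj ?Xn = X' \<and> set ?Xn \<subseteq> V"
    proof (cases "special g V E X R")
      case True
      then have "?Xn = [] \<and> X = []" using special_succ[OF R0] by blast
      then show ?thesis using PX XX' by simp
    next
      case ns: False
      then have nv: "\<not> vmove L" using False by simp
      have ns2: "is_pos g V E ?Xn R0 \<and> (prefix X ?Xn \<or> prefix ?Xn X) \<and>
           card ((set X - set ?Xn) \<union> (set ?Xn - set X)) = 1" using nonspecial_succ[OF R0 ns] by blast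
      have si: "set ?Xn \<inter> V' = set X \<inter> V'" using nv L by (simp add: vmove_def)
      then have "proj ?Xn = proj X" using move_info[of X ?Xn] ns2 by blast
      moreover have "set ?Xn \<subseteq> V" using ns2 pos_sub by blast
      ultimately show ?thesis using si XX' PX by simp
    qed
    have posL2: "is_pos g V E ?Xn (resp ?Xn R')" using resp_pos[OF pos] key by blast
    have succ: "is_succ g V E (X, R) ?L2"
    proof (cases "special g V E X R")
      case True
      then have "?Xn = []" using special_succ[OF R0] by blast
      then show ?thesis using is_succ_special_I[OF True] posL2 by simp
    next
      case ns: False
      have ns2: "(prefix X ?Xn \<or> prefix ?Xn X) \<and>
           card ((set X - set ?Xn) \<union> (set ?Xn - set X)) = 1" using nonspecial_succ[OF R0 ns] by blast
      show ?thesis using is_succ_I[OF ns posL2] ns2 skip_cond[OF RR, of ?Xn X] by blast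
    qed
    have st: "stepG L ?L2" using succ L by (simp add: stepG_def)
    have r2: "reachG ?L2" using reachG.step[OF rL st] .
    have ht2: "ht ?L2 < ht L" using ht_dec[OF rL] RNE L st by simp
    have "R' \<subseteq> V - set ?Xn" using R'sub key VV by blast
    then have "R' \<subseteq> resp ?Xn R'" by (rule resp_sup)
    then have rel2: "Rel ?L2 (X', R')" using key by (simp add: Rel_def)
    obtain L1 where "reachG L1 \<and> Rel L1 (X', R') \<and> ht L1 \<le> ht ?L2 \<and>
           vmove L1 \<and> \<not> special g V E (fst L1) (snd L1)"
      using less(1)[OF ht2 r2 rel2] by blast
    then show ?thesis using ht2 by (intro exI[of _ L1]) auto
  qed
qed

end


lemma pos_empty: "set X \<subseteq> V \<Longrightarrow> is_pos g V E X {}"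
  by (cases g) (simp_all add: is_pos_def succ_closed_def)

lemma closed_under:
  assumes pos: "is_pos g V E X R" and w: "w \<in> R"
  shows "(g \<in> {GI, GV} \<longrightarrow> reach_in E (V - set X) w v \<longrightarrow> v \<in> R) \<and>
         (g \<notin> {GI, GV} \<longrightarrow> same_scc E (V - set X) w v \<longrightarrow> v \<in> R)"
proof (cases g)
  case GI
  then have "succ_closed E (V - set X) R" using pos by (simp add: is_pos_def)
  then show ?thesis using GI reach_in_closed[of E "V - set X" R w v] w by simp
next
  case GV
  then have "succ_closed E (V - set X) R" using pos by (simp add: is_pos_def)
  then show ?thesis using GV reach_in_closed[of E "V - set X" R w v] w by simp
next
  case GISC
  then have "\<forall>v\<in>R. {u. same_scc E (V - set X) v u} \<subseteq> R" using pos by (simp add: is_pos_def)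
  then show ?thesis using GISC w by blast
next
  case GVSC
  then have "R = {} \<or> is_scc E (V - set X) R" using pos by (simp add: is_pos_def)
  then have "is_scc E (V - set X) R" using w by blast
  then obtain u where u: "R = {x. same_scc E (V - set X) u x}" by (auto simp: is_scc_def)
  have "same_scc E (V - set X) u w" using u w by simp
  then have "same_scc E (V - set X) w v \<longrightarrow> v \<in> R" using u same_scc_trans[of E "V - set X" u w v] by simp
  then show ?thesis using GVSC by simp
qed

context sim2 begin

definition lifts where "lifts p = {L. reachG L \<and> Rel L p}"
definition c where "c p = arg_min ht (\<lambda>L. L \<in> lifts p)"
definition good where
  "good p L1 \<longleftrightarrow> reachG L1 \<and> Rel L1 p \<and> ht L1 \<le> ht (c p) \<and> vmove L1 \<and> \<not> special g V E (fst L1) (snd L1)"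
definition fb where
  "fb X = (if X = [] then [SOME v. v \<in> V'] else take (SOME n. \<exists>a\<in>set X. set (take n X) = set X - {a}) X)"
definition \<sigma>' where
  "\<sigma>' p = (if special g V' E' (fst p) (snd p) then []
           else if snd p \<noteq> {} \<and> lifts p \<noteq> {} then proj (\<sigma> (SOME L1. good p L1)) else fb (fst p))"

lemma c_lift:
  assumes "lifts p \<noteq> {}" shows "c p \<in> lifts p" "\<And>L. L \<in> lifts p \<Longrightarrow> ht (c p) \<le> ht L"
proof -
  obtain L0 where L0: "L0 \<in> lifts p" using assms by blast
  show "c p \<in> lifts p" unfolding c_def by (rule arg_min_natI[of "\<lambda>L. L \<in> lifts p", OF L0])
  fix L assume "L \<in> lifts p"
  then show "ht (c p) \<le> ht L" unfolding c_def by (rule arg_min_nat_le)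
qed

lemma good_ex:
  assumes pos: "is_pos g V' E' X' R'" and ne: "R' \<noteq> {}" and li: "lifts (X', R') \<noteq> {}"
  shows "good (X', R') (SOME L1. good (X', R') L1)"
proof -
  have cl: "reachG (c (X', R'))" "Rel (c (X', R')) (X', R')" using c_lift(1)[OF li] by (auto simp: lifts_def)
  obtain L1 where "reachG L1 \<and> Rel L1 (X', R') \<and> ht L1 \<le> ht (c (X', R')) \<and>
           vmove L1 \<and> \<not> special g V E (fst L1) (snd L1)"
    using sim[OF pos ne cl] by blast
  then have "good (X', R') L1" by (simp add: good_def)
  then show ?thesis by (rule someI)
qed

lemma fb_props:
  assumes ns: "\<not> special g V' E' X' R'" and XV: "set X' \<subseteq> V'"
  shows "is_succ g V' E' (X', R') (fb X', {}) \<and> length (fb X') \<le> max 1 (length X') \<and>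
         (distinct X' \<longrightarrow> distinct (fb X')) \<and> set (fb X') \<subseteq> V'"
proof (cases "X' = []")
  case True
  define v0 where "v0 = (SOME v. v \<in> V')"
  have v0: "v0 \<in> V'" unfolding v0_def using neV' some_in_eq by blast
  have fbX: "fb X' = [v0]" using True by (simp add: fb_def v0_def)
  have p: "is_pos g V' E' [v0] {}" using v0 by (intro pos_empty) simp
  have "is_succ g V' E' (X', R') ([v0], {})"
    using is_succ_I[OF ns p] True by simp
  then show ?thesis using fbX v0 True by simp
next
  case False
  define n where "n = (SOME n. \<exists>a\<in>set X'. set (take n X') = set X' - {a})"
  have "\<exists>n. \<exists>a\<in>set X'. set (take n X') = set X' - {a}" using take_remove[OF False] by blast
  then have "\<exists>a\<in>set X'. set (take n X') = set X' - {a}" unfolding n_def by (rule someI_ex)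
  then obtain a where a: "a \<in> set X'" "set (take n X') = set X' - {a}" by blast
  have fbX: "fb X' = take n X'" using False by (simp add: fb_def n_def)
  have sub: "set (take n X') \<subseteq> V'" using a XV by blast
  have p: "is_pos g V' E' (take n X') {}" using sub by (rule pos_empty)
  have pre: "prefix (take n X') X'" by (rule take_is_prefix)
  have "(set X' - set (take n X')) \<union> (set (take n X') - set X') = {a}" using a by auto
  then have cd: "card ((set X' - set (take n X')) \<union> (set (take n X') - set X')) = 1" by simp
  have "is_succ g V' E' (X', R') (take n X', {})"
    using is_succ_I[OF ns p _ cd] pre by simp
  then show ?thesis using fbX sub by simp
qed

end


context sim2 begin

lemma main_step:
  assumes pos: "is_pos g V' E' X' R'" and ne: "R' \<noteq> {}" and li: "lifts (X', R') \<noteq> {}"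
  shows "is_succ g V' E' (X', R') (\<sigma>' (X', R'), {})"
    and "length (\<sigma>' (X', R')) \<le> k \<and> distinct (\<sigma>' (X', R')) \<and> set (\<sigma>' (X', R')) \<subseteq> V'"
    and "\<And>R'n. is_succ g V' E' (X', R') (\<sigma>' (X', R'), R'n) \<Longrightarrow>
           lifts (\<sigma>' (X', R'), R'n) \<noteq> {} \<and> ht (c (\<sigma>' (X', R'), R'n)) < ht (c (X', R'))"
    and "\<And>R'n. all_complete g V E \<sigma> monotone_search \<Longrightarrow>
           is_succ g V' E' (X', R') (\<sigma>' (X', R'), R'n) \<Longrightarrow> R'n \<subseteq> R'"
    and "all_complete g V E \<sigma> stationary_search \<Longrightarrow> prefix X' (\<sigma>' (X', R'))"
proof -
  have nsp: "\<not> special g V' E' X' R'" using pos by (auto simp: special_def)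
  define L1 where "L1 = (SOME L1. good (X', R') L1)"
  have gd: "good (X', R') L1" using good_ex[OF pos ne li] L1_def by simp
  obtain X1 R1 where L1e: "L1 = (X1, R1)" by (cases L1)
  have rL1: "reachG L1" and PX: "proj X1 = X'" and RR: "R' \<subseteq> R1"
    and htL1: "ht L1 \<le> ht (c (X', R'))" and vm: "vmove L1" and nsL1: "\<not> special g V E X1 R1"
    using gd L1e by (auto simp: good_def Rel_def)
  define Xn where "Xn = \<sigma> L1"
  have s': "\<sigma>' (X', R') = proj Xn" using nsp ne li by (simp add: \<sigma>'_def L1_def Xn_def)
  have adm: "admissible g V E X1 R1" using reach_adm[OF rL1] L1e by simp
  have pos1: "is_pos g V E X1 R1" using adm nsL1 by (simp add: admissible_def)
  obtain R0 where R0: "is_succ g V E (X1, R1) (Xn, R0)"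
    using strat_succ[of L1] adm L1e Xn_def by auto
  have ns2: "is_pos g V E Xn R0 \<and> (prefix X1 Xn \<or> prefix Xn X1) \<and>
           card ((set X1 - set Xn) \<union> (set Xn - set X1)) = 1" using nonspecial_succ[OF R0 nsL1] by blast
  have XnV: "set Xn \<subseteq> V" using ns2 pos_sub by blast
  have XX': "set X1 \<inter> V' = set X'" using PX set_proj by metis
  have XnX'n: "set Xn \<inter> V' = set (proj Xn)" using set_proj by metis
  have vmv: "set Xn \<inter> V' \<noteq> set X1 \<inter> V'" using vm L1e Xn_def by (simp add: vmove_def)
  obtain a where aV: "a \<in> V'" and a: "(a \<notin> set X1 \<and> set Xn = insert a (set X1) \<and> proj Xn = proj X1 @ [a]) \<or>
            (a \<notin> set Xn \<and> set X1 = insert a (set Xn) \<and> proj X1 = proj Xn @ [a])"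
    using move_info[of X1 Xn] ns2 vmv by blast
  let ?X'n = "proj Xn"
  have st0: "stepG L1 (Xn, R0)" using R0 L1e Xn_def by (simp add: stepG_def)
  have rXn: "reachG (Xn, R0)" by (rule reachG.step[OF rL1 st0])
  have R1ne: "R1 \<noteq> {}" using RR ne by blast
  have mv': "(prefix X' ?X'n \<or> prefix ?X'n X') \<and> card ((set X' - set ?X'n) \<union> (set ?X'n - set X')) = 1"
  proof (cases "a \<notin> set X1 \<and> set Xn = insert a (set X1) \<and> proj Xn = proj X1 @ [a]")
    case True
    then have e: "?X'n = X' @ [a]" using PX by auto
    have na: "a \<notin> set X'" using True XX' by blast
    have "(set X' - set ?X'n) \<union> (set ?X'n - set X') = {a}" using e na by auto
    then show ?thesis using e by simp
  next
    case False
    then have "a \<notin> set Xn \<and> proj X1 = proj Xn @ [a]" using a by blast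
    then have e: "X' = ?X'n @ [a]" and na: "a \<notin> set ?X'n" using PX set_proj by auto
    have "(set X' - set ?X'n) \<union> (set ?X'n - set X') = {a}" using e na by auto
    then show ?thesis using e by simp
  qed
  show "is_succ g V' E' (X', R') (\<sigma>' (X', R'), {})"
  proof -
    have "set ?X'n \<subseteq> V'" using set_proj by blast
    then have p: "is_pos g V' E' ?X'n {}" by (rule pos_empty)
    have "is_succ g V' E' (X', R') (?X'n, {})" using is_succ_I[OF nsp p] mv' by simp
    then show ?thesis using s' by simp
  qed
  show "length (\<sigma>' (X', R')) \<le> k \<and> distinct (\<sigma>' (X', R')) \<and> set (\<sigma>' (X', R')) \<subseteq> V'"
  proof -
    have "length ?X'n \<le> length Xn" by (rule length_proj)
    moreover have "length Xn \<le> k" using reach_len[OF rXn] by simp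
    ultimately show ?thesis using s' distinct_proj set_proj by simp
  qed
  show "lifts (\<sigma>' (X', R'), R'n) \<noteq> {} \<and> ht (c (\<sigma>' (X', R'), R'n)) < ht (c (X', R'))"
    if sc0: "is_succ g V' E' (X', R') (\<sigma>' (X', R'), R'n)" for R'n
  proof -
    have sc: "is_succ g V' E' (X', R') (?X'n, R'n)" using sc0 s' by simp
    have ns3: "is_pos g V' E' ?X'n R'n \<and> (if g \<in> {GI, GV}
            then (\<forall>v'\<in>R'n. \<exists>v\<in>R'. reach_in E' (V' - (set X' \<inter> set ?X'n)) v v')
            else (\<forall>v'\<in>R'n. \<exists>v\<in>R'. same_scc E' (V' - (set X' \<inter> set ?X'n)) v v'))"
      using nonspecial_succ[OF sc nsp] by blast
    have posr: "is_pos g V E Xn (resp Xn R'n)" using resp_pos[OF _ XnV XnX'n] ns3 by blast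
    have W: "V' - (set X' \<inter> set ?X'n) \<subseteq> V - (set X1 \<inter> set Xn)" by (rule W_sub[OF XX' XnX'n])
    have cnd: "if g \<in> {GI, GV}
            then (\<forall>v'\<in>resp Xn R'n. \<exists>v\<in>R1. reach_in E (V - (set X1 \<inter> set Xn)) v v')
            else (\<forall>v'\<in>resp Xn R'n. \<exists>v\<in>R1. same_scc E (V - (set X1 \<inter> set Xn)) v v')"
      using cond_lift[OF RR W] ns3 by blast
    have succ: "is_succ g V E (X1, R1) (Xn, resp Xn R'n)"
      using is_succ_I[OF nsL1 posr _ _ cnd] ns2 by blast
    have st: "stepG L1 (Xn, resp Xn R'n)" using succ L1e Xn_def by (simp add: stepG_def)
    have r2: "reachG (Xn, resp Xn R'n)" by (rule reachG.step[OF rL1 st])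
    have ht2: "ht (Xn, resp Xn R'n) < ht L1" using ht_dec[OF rL1 _ st] R1ne L1e by simp
    have "R'n \<subseteq> V' - set ?X'n" using ns3 pos_sub by blast
    then have "R'n \<subseteq> V - set Xn" using VV XnX'n by blast
    then have "R'n \<subseteq> resp Xn R'n" by (rule resp_sup)
    then have "Rel (Xn, resp Xn R'n) (?X'n, R'n)" by (simp add: Rel_def)
    then have inl: "(Xn, resp Xn R'n) \<in> lifts (?X'n, R'n)" using r2 by (simp add: lifts_def)
    then have "ht (c (?X'n, R'n)) \<le> ht (Xn, resp Xn R'n)" using c_lift(2)[of "(?X'n, R'n)"] by blast
    then show ?thesis using inl ht2 htL1 s' by auto
  qed
  show "R'n \<subseteq> R'" if mono: "all_complete g V E \<sigma> monotone_search"
    and sc0: "is_succ g V' E' (X', R') (\<sigma>' (X', R'), R'n)" for R'n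
  proof
    fix v assume vR: "v \<in> R'n"
    have sc: "is_succ g V' E' (X', R') (?X'n, R'n)" using sc0 s' by simp
    have cond': "if g \<in> {GI, GV}
            then (\<forall>v'\<in>R'n. \<exists>v\<in>R'. reach_in E' (V' - (set X' \<inter> set ?X'n)) v v')
            else (\<forall>v'\<in>R'n. \<exists>v\<in>R'. same_scc E' (V' - (set X' \<inter> set ?X'n)) v v')"
      using nonspecial_succ[OF sc nsp] by blast
    show "v \<in> R'"
    proof (cases "a \<notin> set X1 \<and> set Xn = insert a (set X1) \<and> proj Xn = proj X1 @ [a]")
      case True
      then have e: "?X'n = X' @ [a]" using PX by auto
      then have I: "set X' \<inter> set ?X'n = set X'" by auto
      show ?thesis
      proof (cases "g \<in> {GI, GV}")
        case True
        then obtain w where w: "w \<in> R'" "reach_in E' (V' - set X') w v" using cond' vR I by auto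
        then show ?thesis using closed_under[OF pos w(1)] True by blast
      next
        case False
        then obtain w where w: "w \<in> R'" "same_scc E' (V' - set X') w v" using cond' vR I by auto
        then show ?thesis using closed_under[OF pos w(1)] False by blast
      qed
    next
      case False
      then have ar: "a \<notin> set Xn" "set X1 = insert a (set Xn)" "proj X1 = proj Xn @ [a]" using a by blast+
      then have e: "X' = ?X'n @ [a]" using PX by simp
      have na: "a \<notin> set ?X'n" using ar(1) set_proj by auto
      have I: "set X' \<inter> set ?X'n = set ?X'n" using e by auto
      have W1a: "V' - set ?X'n - {a} = V' - set X'" using e by auto
      have W1G: "V' - set ?X'n \<subseteq> V - set Xn" using VV XnX'n by blast
      have aX1: "a \<in> set X1" using ar(2) by simp
      have R1sub: "R1 \<subseteq> V - set X1" using pos_sub[OF pos1] by blast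
      have WW: "V - set X1 \<subseteq> V - set Xn" using ar(2) by blast
      have posM: "is_pos g V E Xn (resp Xn R1)"
        by (rule resp_pos_gen[OF order_refl order_refl finV pos1 XnV WW])
      have succM: "is_succ g V E (X1, R1) (Xn, resp Xn R1)"
        using is_succ_I[OF nsL1 posM _ _ skip_cond[where R'=R1 and R=R1 and Xn=Xn and X=X1, OF order_refl]] ns2 by blast
      have stM: "stepG L1 (Xn, resp Xn R1)" using succM L1e Xn_def by (simp add: stepG_def)
      have Msub: "resp Xn R1 \<subseteq> R1" using mono_G[OF mono rL1 stM] L1e by simp
      show ?thesis
      proof (rule ccontr)
        assume vn: "v \<notin> R'"
        have "a \<in> resp Xn R1"
        proof (cases "g \<in> {GI, GV}")
          case True
          then obtain w where w: "w \<in> R'" "reach_in E' (V' - set ?X'n) w v" using cond' vR I by auto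
          have "\<not> reach_in E' (V' - set X') w v" using closed_under[OF pos w(1)] True vn by blast
          then have "\<not> reach_in E' (V' - set ?X'n - {a}) w v" using W1a by simp
          then have "reach_in E' (V' - set ?X'n) w a" using reach_in_via[OF w(2)] by blast
          then have "reach_in E (V - set Xn) w a" by (rule reach_in_mono[OF _ EE W1G])
          then show ?thesis using w(1) RR True by (auto simp: resp_def)
        next
          case False
          then obtain w where w: "w \<in> R'" "same_scc E' (V' - set ?X'n) w v" using cond' vR I by auto
          have "\<not> same_scc E' (V' - set X') w v" using closed_under[OF pos w(1)] False vn by blast
          then have nss: "\<not> same_scc E' (V' - set ?X'n - {a}) w v" using W1a by simp
          have wv: "reach_in E' (V' - set ?X'n) w v" and vw: "reach_in E' (V' - set ?X'n) v w"
            using w(2) by (auto simp: same_scc_def)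
          have "same_scc E' (V' - set ?X'n) w a"
          proof (cases "reach_in E' (V' - set ?X'n - {a}) w v")
            case True
            then have "\<not> reach_in E' (V' - set ?X'n - {a}) v w" using nss by (simp add: same_scc_def)
            then have h: "reach_in E' (V' - set ?X'n) v a \<and> reach_in E' (V' - set ?X'n) a w"
              using reach_in_via[OF vw] by blast
            have "reach_in E' (V' - set ?X'n) w a" using reach_in_trans[OF wv] h by blast
            then show ?thesis using h by (simp add: same_scc_def)
          next
            case False
            then have h: "reach_in E' (V' - set ?X'n) w a \<and> reach_in E' (V' - set ?X'n) a v"
              using reach_in_via[OF wv] by blast
            have "reach_in E' (V' - set ?X'n) a w" using reach_in_trans[OF _ vw] h by blast
            then show ?thesis using h by (simp add: same_scc_def)
          qed
          then have "same_scc E (V - set Xn) w a" by (rule same_scc_mono[OF _ EE W1G])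
          then show ?thesis using w(1) RR False by (auto simp: resp_def)
        qed
        then have "a \<in> R1" using Msub by blast
        then show False using R1sub aX1 by blast
      qed
    qed
  qed
  show "prefix X' (\<sigma>' (X', R'))" if stat: "all_complete g V E \<sigma> stationary_search"
  proof -
    have "prefix (fst L1) (fst (Xn, R0))" using stat_G[OF stat rL1 st0] R1ne L1e by simp
    then have "prefix X1 Xn" using L1e by simp
    then have "prefix (proj X1) (proj Xn)" by (rule proj_prefix)
    then show ?thesis using PX s' by simp
  qed
qed

end


lemma nat_no_desc: "(\<And>i. (f (Suc i) :: nat) < f i) \<Longrightarrow> False"
proof -
  assume d: "\<And>i. (f (Suc i) :: nat) < f i"
  have "f i + i \<le> f 0" for i
  proof (induct i)
    case 0 then show ?case by simp
  next
    case (Suc i) then show ?case using d[of i] by simp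
  qed
  from this[of "Suc (f 0)"] show False by simp
qed

context sim2 begin

definition Inv where
  "Inv p \<longleftrightarrow> distinct (fst p) \<and> set (fst p) \<subseteq> V' \<and> length (fst p) \<le> k \<and>
     (snd p \<noteq> {} \<longrightarrow> lifts p \<noteq> {}) \<and> admissible g V' E' (fst p) (snd p)"

lemma strat': "strategy g V' E' \<sigma>'"
  unfolding strategy_def
proof (intro allI impI)
  fix X R assume adm: "admissible g V' E' X R"
  show "\<exists>R'. is_succ g V' E' (X, R) (\<sigma>' (X, R), R')"
  proof (cases "special g V' E' X R")
    case True
    have "is_pos g V' E' [] {}" by (rule pos_empty) simp
    then have "is_succ g V' E' (X, R) ([], {})" by (rule is_succ_special_I[OF True])
    then show ?thesis using True by (auto simp: \<sigma>'_def)
  next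
    case False
    then have pos: "is_pos g V' E' X R" using adm by (simp add: admissible_def)
    show ?thesis
    proof (cases "R \<noteq> {} \<and> lifts (X, R) \<noteq> {}")
      case True
      then show ?thesis using main_step(1)[OF pos] by blast
    next
      case nt: False
      have "set X \<subseteq> V'" using pos pos_sub by blast
      then have "is_succ g V' E' (X, R) (fb X, {})" using fb_props[OF False] by blast
      moreover have "\<sigma>' (X, R) = fb X" using False nt by (auto simp: \<sigma>'_def)
      ultimately show ?thesis by auto
    qed
  qed
qed

lemma inv_start: "Inv ([], V')"
proof -
  have "([], V) \<in> lifts ([], V')" using reachG.start VV by (simp add: lifts_def Rel_def proj_def)
  then show ?thesis using start_adm by (auto simp: Inv_def)
qed

lemma inv_step:
  assumes inv: "Inv (X, R)" and sc: "is_succ g V' E' (X, R) (X2, R2)" and f: "X2 = \<sigma>' (X, R)"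
  shows "Inv (X2, R2)"
proof -
  have adm2: "admissible g V' E' X2 R2" using succ_adm[OF sc] by simp
  have pos2: "is_pos g V' E' X2 R2" using succ_pos[OF sc] by simp
  show ?thesis
  proof (cases "special g V' E' X R")
    case True
    then have X2: "X2 = []" using f by (simp add: \<sigma>'_def)
    have "R2 \<subseteq> V" using pos2 pos_sub VV by blast
    then have "([], V) \<in> lifts (X2, R2)" using reachG.start X2 by (simp add: lifts_def Rel_def proj_def)
    then show ?thesis using X2 adm2 by (auto simp: Inv_def)
  next
    case ns: False
    then have pos: "is_pos g V' E' X R" using inv by (simp add: Inv_def admissible_def)
    show ?thesis
    proof (cases "R \<noteq> {} \<and> lifts (X, R) \<noteq> {}")
      case True
      then have "R \<noteq> {}" "lifts (X, R) \<noteq> {}" by auto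
      note ms = main_step[OF pos this]
      have "lifts (X2, R2) \<noteq> {}" using ms(3) sc f by simp
      then show ?thesis using ms(2) f adm2 by (simp add: Inv_def)
    next
      case False
      then have R: "R = {}" using inv by (auto simp: Inv_def)
      then have R2: "R2 = {}" using empty_stays sc neV' by blast
      have XV: "set X \<subseteq> V'" using inv by (simp add: Inv_def)
      have fb: "X2 = fb X" using f ns False by (auto simp: \<sigma>'_def)
      have fp: "length (fb X) \<le> max 1 (length X) \<and> (distinct X \<longrightarrow> distinct (fb X)) \<and> set (fb X) \<subseteq> V'"
        using fb_props[OF ns XV] by blast
      have "length X \<le> k" "distinct X" using inv by (auto simp: Inv_def)
      then show ?thesis using fp fb R2 adm2 k_pos by (auto simp: Inv_def)
    qed
  qed
qed

lemma inv_all: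
  assumes cs: "cons_search g V' E' \<sigma>' t N" shows "enat i < N \<Longrightarrow> Inv (t i)"
proof (induct i)
  case 0 then show ?case using cs inv_start by (simp add: cons_search_def)
next
  case (Suc i)
  then have "enat i < N" using Suc_ile_eq order_less_imp_le by (metis enat_ord_simps(2) lessI order_less_trans)
  then have I: "Inv (t i)" using Suc by blast
  have sc: "is_succ g V' E' (t i) (t (Suc i))" and f: "fst (t (Suc i)) = \<sigma>' (t i)"
    using cs Suc(2) by (auto simp: cons_search_def)
  obtain X R where ti: "t i = (X, R)" by (cases "t i")
  obtain X2 R2 where ti2: "t (Suc i) = (X2, R2)" by (cases "t (Suc i)")
  show ?case using inv_step[of X R X2 R2] I sc f ti ti2 by simp
qed

lemma win': "all_complete g V' E' \<sigma>' winning_search"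
  unfolding all_complete_def
proof (intro allI impI)
  fix t N assume a: "cons_search g V' E' \<sigma>' t N \<and> complete t N"
  then have cs: "cons_search g V' E' \<sigma>' t N" by simp
  show "winning_search t N"
  proof (rule ccontr)
    assume nw: "\<not> winning_search t N"
    then have Ninf: "N = \<infinity>" using a by (auto simp: complete_def winning_search_def)
    have ne: "snd (t i) \<noteq> {}" for i using nw Ninf by (auto simp: winning_search_def)
    have sc: "is_succ g V' E' (t i) (t (Suc i))" and f: "fst (t (Suc i)) = \<sigma>' (t i)" for i
      using cs Ninf by (auto simp: cons_search_def)
    have pos: "is_pos g V' E' (fst (t (Suc i))) (snd (t (Suc i)))" for i using succ_pos[OF sc] .
    have li: "lifts (t i) \<noteq> {}" for i using inv_all[OF cs] ne Ninf by (auto simp: Inv_def)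
    have "ht (c (t (Suc (Suc i)))) < ht (c (t (Suc i)))" for i
    proof -
      let ?p = "t (Suc i)"
      have eq: "?p = (fst ?p, snd ?p)" by simp
      have ms: "\<And>R'n. is_succ g V' E' (fst ?p, snd ?p) (\<sigma>' (fst ?p, snd ?p), R'n) \<Longrightarrow>
           lifts (\<sigma>' (fst ?p, snd ?p), R'n) \<noteq> {} \<and> ht (c (\<sigma>' (fst ?p, snd ?p), R'n)) < ht (c (fst ?p, snd ?p))"
        using main_step(3)[OF pos[of i] ne[of "Suc i"]] li[of "Suc i"] by simp
      have "is_succ g V' E' (fst ?p, snd ?p) (\<sigma>' (fst ?p, snd ?p), snd (t (Suc (Suc i))))"
        using sc[of "Suc i"] f[of "Suc i"] by (metis prod.collapse)
      then have "ht (c (\<sigma>' (fst ?p, snd ?p), snd (t (Suc (Suc i))))) < ht (c (fst ?p, snd ?p))"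
        using ms by blast
      then show ?thesis using f[of "Suc i"] by (metis prod.collapse)
    qed
    then show False using nat_no_desc[of "\<lambda>i. ht (c (t (Suc i)))"] by blast
  qed
qed

lemma bnd': "all_complete g V' E' \<sigma>' (bounded_search k)"
  unfolding all_complete_def bounded_search_def
  using inv_all by (auto simp: Inv_def)

lemma mono':
  assumes mono: "all_complete g V E \<sigma> monotone_search"
  shows "all_complete g V' E' \<sigma>' monotone_search"
  unfolding all_complete_def monotone_search_def
proof (intro allI impI)
  fix t N i assume a: "cons_search g V' E' \<sigma>' t N \<and> complete t N" and i: "enat (Suc i) < N"
  then have cs: "cons_search g V' E' \<sigma>' t N" by simp
  have iN: "enat i < N" using i by (metis enat_ord_simps(2) lessI order_less_trans)
  have I: "Inv (t i)" using inv_all[OF cs iN] .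
  obtain X R where ti: "t i = (X, R)" by (cases "t i")
  obtain X2 R2 where ti2: "t (Suc i) = (X2, R2)" by (cases "t (Suc i)")
  have sc: "is_succ g V' E' (X, R) (X2, R2)" and f: "X2 = \<sigma>' (X, R)"
    using cs i ti ti2 by (auto simp: cons_search_def)
  have "R2 \<subseteq> R"
  proof (cases "special g V' E' X R")
    case True
    have "is_pos g V' E' X2 R2" using succ_pos[OF sc] by simp
    then show ?thesis using True by (auto simp: special_def is_pos_def)
  next
    case ns: False
    then have pos: "is_pos g V' E' X R" using I ti by (simp add: Inv_def admissible_def)
    show ?thesis
    proof (cases "R = {}")
      case True
      then show ?thesis using empty_stays sc neV' by blast
    next
      case False
      then have li: "lifts (X, R) \<noteq> {}" using I ti by (simp add: Inv_def)
      show ?thesis using main_step(4)[OF pos False li mono] sc f by simp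
    qed
  qed
  then show "snd (t (Suc i)) \<subseteq> snd (t i)" using ti ti2 by simp
qed

lemma stat':
  assumes stat: "all_complete g V E \<sigma> stationary_search"
  shows "all_complete g V' E' \<sigma>' stationary_search"
  unfolding all_complete_def stationary_search_def
proof (intro allI impI)
  fix t N i assume a: "cons_search g V' E' \<sigma>' t N \<and> complete t N" and i: "enat (Suc i) < N"
    and ne: "snd (t i) \<noteq> {}"
  then have cs: "cons_search g V' E' \<sigma>' t N" by simp
  have iN: "enat i < N" using i by (metis enat_ord_simps(2) lessI order_less_trans)
  have I: "Inv (t i)" using inv_all[OF cs iN] .
  obtain X R where ti: "t i = (X, R)" by (cases "t i")
  obtain X2 R2 where ti2: "t (Suc i) = (X2, R2)" by (cases "t (Suc i)")
  have sc: "is_succ g V' E' (X, R) (X2, R2)" and f: "X2 = \<sigma>' (X, R)"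
    using cs i ti ti2 by (auto simp: cons_search_def)
  have "prefix X X2"
  proof (cases "special g V' E' X R")
    case True
    then show ?thesis by (simp add: special_def)
  next
    case ns: False
    then have pos: "is_pos g V' E' X R" using I ti by (simp add: Inv_def admissible_def)
    have R: "R \<noteq> {}" using ne ti by simp
    then have li: "lifts (X, R) \<noteq> {}" using I ti by (simp add: Inv_def)
    show ?thesis using main_step(5)[OF pos R li stat] f by simp
  qed
  then show "prefix (fst (t i)) (fst (t (Suc i)))" using ti ti2 by simp
qed

end

lemma transfer:
  assumes sub: "subgraph V' E' V E" and st: "strategy g V E \<sigma>"
    and w: "all_complete g V E \<sigma> winning_search" and b: "all_complete g V E \<sigma> (bounded_search k)"
  shows "\<exists>\<sigma>'. strategy g V' E' \<sigma>' \<and> all_complete g V' E' \<sigma>' winning_search \<and>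
           all_complete g V' E' \<sigma>' (bounded_search k) \<and>
           (all_complete g V E \<sigma> monotone_search \<longrightarrow> all_complete g V' E' \<sigma>' monotone_search) \<and>
           (all_complete g V E \<sigma> stationary_search \<longrightarrow> all_complete g V' E' \<sigma>' stationary_search)"
proof -
  have fin: "finite V" and ne: "V \<noteq> {}" using sub by (auto simp: subgraph_def digraph_def)
  interpret S: sim2 g V E \<sigma> k V' E'
    by unfold_locales (fact fin ne st w b sub)+
  show ?thesis using S.strat' S.win' S.bnd' S.mono' S.stat' by blast
qed

theorem proposition1:
  fixes V V' :: "'a set" and E E' :: "('a \<times> 'a) set"
  assumes "subgraph V' E' V E"
  shows "sstat_vsc V' E' \<le> sstat_vsc V E \<and>
         (\<forall>g. lifo g V' E' \<le> lifo g V E \<and> mlifo g V' E' \<le> mlifo g V E)"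
proof (intro conjI allI)
  show "sstat_vsc V' E' \<le> sstat_vsc V E"
    unfolding sstat_vsc_def
  proof (rule Inf_superset_mono, rule subsetI)
    fix x assume "x \<in> {enat k |k. \<exists>\<sigma>. strategy GVSC V E \<sigma> \<and> all_complete GVSC V E \<sigma> winning_search
       \<and> all_complete GVSC V E \<sigma> stationary_search \<and> all_complete GVSC V E \<sigma> (bounded_search k)}"
    then obtain k \<sigma> where "x = enat k" "strategy GVSC V E \<sigma>" "all_complete GVSC V E \<sigma> winning_search"
       "all_complete GVSC V E \<sigma> stationary_search" "all_complete GVSC V E \<sigma> (bounded_search k)" by blast
    then show "x \<in> {enat k |k. \<exists>\<sigma>. strategy GVSC V' E' \<sigma> \<and> all_complete GVSC V' E' \<sigma> winning_search
       \<and> all_complete GVSC V' E' \<sigma> stationary_search \<and> all_complete GVSC V' E' \<sigma> (bounded_search k)}"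
      using transfer[OF assms, of GVSC \<sigma> k] by blast
  qed
  fix g
  show "lifo g V' E' \<le> lifo g V E"
    unfolding lifo_def
  proof (rule Inf_superset_mono, rule subsetI)
    fix x assume "x \<in> {enat k |k. \<exists>\<sigma>. strategy g V E \<sigma> \<and> all_complete g V E \<sigma> winning_search
       \<and> all_complete g V E \<sigma> (bounded_search k)}"
    then obtain k \<sigma> where "x = enat k" "strategy g V E \<sigma>" "all_complete g V E \<sigma> winning_search"
       "all_complete g V E \<sigma> (bounded_search k)" by blast
    then show "x \<in> {enat k |k. \<exists>\<sigma>. strategy g V' E' \<sigma> \<and> all_complete g V' E' \<sigma> winning_search
       \<and> all_complete g V' E' \<sigma> (bounded_search k)}"
      using transfer[OF assms, of g \<sigma> k] by blast
  qed
  show "mlifo g V' E' \<le> mlifo g V E"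
    unfolding mlifo_def
  proof (rule Inf_superset_mono, rule subsetI)
    fix x assume "x \<in> {enat k |k. \<exists>\<sigma>. strategy g V E \<sigma> \<and> all_complete g V E \<sigma> winning_search
       \<and> all_complete g V E \<sigma> monotone_search \<and> all_complete g V E \<sigma> (bounded_search k)}"
    then obtain k \<sigma> where "x = enat k" "strategy g V E \<sigma>" "all_complete g V E \<sigma> winning_search"
       "all_complete g V E \<sigma> monotone_search" "all_complete g V E \<sigma> (bounded_search k)" by blast
    then show "x \<in> {enat k |k. \<exists>\<sigma>. strategy g V' E' \<sigma> \<and> all_complete g V' E' \<sigma> winning_search
       \<and> all_complete g V' E' \<sigma> monotone_search \<and> all_complete g V' E' \<sigma> (bounded_search k)}"
      using transfer[OF assms, of g \<sigma> k] by blast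
  qed
qed


end
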